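(* Suppose the Markov chain $\Xi$ on $\mathbb X\subseteq\mathbb R$ satisfies $(\mathrm T^{\mathrm{out}}_{\alpha,\beta,c})$. Then for every $\nu$ with $\alpha-\beta<\nu<\alpha$: as $x\to+\infty$, $D_1(x)=\nu x^{\nu-1}\mathbb E_x[\theta]+c\nu x^{\nu-\alpha}\kappa_0(\nu)+o(x^{\nu-\alpha})$; and as $x\to\pm\infty$, $$D_2(x)=\nu\,\mathrm{sign}(x)|x|^{\nu-1}\mathbb E_x[\theta]+c\nu|x|^{\nu-\alpha}\kappa_0(\nu)+o(|x|^{\nu-\alpha}),$$ where $\kappa_0(\nu):=(1-\nu)\frac{\Gamma(\alpha-\nu)\Gamma(1-\alpha)}{\Gamma(2-\nu)}$.
   Context: $\theta:=\xi_1-\xi_0$; $\mathbb P_x,\mathbb E_x$ refer to the chain started at $x$; $y_+:=y\mathbf 1\{y\ge0\}$, $y_-:=-y\mathbf 1\{y<0\}$. For $\nu\in\mathbb R$: $f_1^\nu(x)=x^\nu$ for $x\ge1$ and $=1$ for $x<1$; $f_2^\nu(x)=|x|^\nu$ for $|x|\ge1$ and $=1$ for $|x|<1$; $D_i(x):=\mathbb E[f_i^\nu(\xi_{n+1})-f_i^\nu(\xi_n)\mid\xi_n=x]$. $(\mathrm T^{\mathrm{out}}_{\alpha,\beta,c})$: there exist $\alpha\in(1,2)$, $\beta>\alpha$, $c>0$, $x_0\in\mathbb R_+$ with $\lim_{y\to\infty}\sup_{x\ge x_0}|y^\alpha\mathbb P_x[\theta_+>y]-c|=\lim_{y\to\infty}\sup_{x\le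 -x_0}|y^\alpha\mathbb P_x[\theta_->y]-c|=0$, $\sup_{x\ge x_0}\mathbb E_x[\theta_-^\beta]<\infty$, $\sup_{x\le-x_0}\mathbb E_x[\theta_+^\beta]<\infty$. *)

theory Defs
  imports "HOL-Probability.Probability" "HOL-Library.Landau_Symbols"
begin

(* A time-homogeneous Markov chain on X \<subseteq> \<real> is represented by its one-step
   transition kernel K: for x \<in> X, K x is the law of \<xi>_{n+1} given \<xi>_n = x.
   Under P_x, \<theta> = \<xi>_1 - \<xi>_0 is the image of K x under (\<lambda>z. z - x). *)

definition pospart :: "real \<Rightarrow> real" where
  "pospart y = (if y \<ge> 0 then y else 0)"

definition negpart :: "real \<Rightarrow> real" where
  "negpart y = (if y < 0 then - y else 0)"

definition f1 :: "real \<Rightarrow> real \<Rightarrow> real" where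
  "f1 \<nu> x = (if x \<ge> 1 then x powr \<nu> else 1)"

definition f2 :: "real \<Rightarrow> real \<Rightarrow> real" where
  "f2 \<nu> x = (if \<bar>x\<bar> \<ge> 1 then \<bar>x\<bar> powr \<nu> else 1)"

definition drift :: "(real \<Rightarrow> real measure) \<Rightarrow> real \<Rightarrow> real" where
  "drift K x = (\<integral> z. (z - x) \<partial>K x)"

definition D1 :: "(real \<Rightarrow> real measure) \<Rightarrow> real \<Rightarrow> real \<Rightarrow> real" where
  "D1 K \<nu> x = (\<integral> z. (f1 \<nu> z - f1 \<nu> x) \<partial>K x)"

definition D2 :: "(real \<Rightarrow> real measure) \<Rightarrow> real \<Rightarrow> real \<Rightarrow> real" where
  "D2 K \<nu> x = (\<integral> z. (f2 \<nu> z - f2 \<nu> x) \<partial>K x)"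

definition kappa0 :: "real \<Rightarrow> real \<Rightarrow> real" where
  "kappa0 \<alpha> \<nu> = (1 - \<nu>) * Gamma (\<alpha> - \<nu>) * Gamma (1 - \<alpha>) / Gamma (2 - \<nu>)"

definition markov_kernel_on :: "real set \<Rightarrow> (real \<Rightarrow> real measure) \<Rightarrow> bool" where
  "markov_kernel_on X K \<longleftrightarrow>
     (\<forall>x\<in>X. prob_space (K x) \<and> sets (K x) = sets borel \<and> (AE z in K x. z \<in> X))"

(* Condition (T^out_{\<alpha>,\<beta>,c}); the uniform limits
   lim_{y\<to>\<infinity>} sup_{x} |y^\<alpha> P_x[...] - c| = 0 are written in \<epsilon>-form. *)
definition T_out :: "real set \<Rightarrow> (real \<Rightarrow> real measure) \<Rightarrow> real \<Rightarrow> real \<Rightarrow> real \<Rightarrow> bool" where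
  "T_out X K \<alpha> \<beta> c \<longleftrightarrow>
     1 < \<alpha> \<and> \<alpha> < 2 \<and> \<beta> > \<alpha> \<and> c > 0 \<and>
     (\<exists>x0 \<ge> 0.
        (\<forall>\<epsilon>>0. \<forall>\<^sub>F y in at_top. \<forall>x\<in>X. x \<ge> x0 \<longrightarrow>
            \<bar>y powr \<alpha> * measure (K x) {z. pospart (z - x) > y} - c\<bar> \<le> \<epsilon>) \<and>
        (\<forall>\<epsilon>>0. \<forall>\<^sub>F y in at_top. \<forall>x\<in>X. x \<le> - x0 \<longrightarrow>
            \<bar>y powr \<alpha> * measure (K x) {z. negpart (z - x) > y} - c\<bar> \<le> \<epsilon>) \<and>
        (\<exists>B::real. \<forall>x\<in>X. x \<ge> x0 \<longrightarrow>
            (\<integral>\<^sup>+ z. ennreal (negpart (z - x) powr \<beta>) \<partial>K x) \<le> ennreal B) \<and>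
        (\<exists>B::real. \<forall>x\<in>X. x \<le> - x0 \<longrightarrow>
            (\<integral>\<^sup>+ z. ennreal (pospart (z - x) powr \<beta>) \<partial>K x) \<le> ennreal B))"

end

theory Submission
  imports Defs
begin

lemma gamma_scaled:
  fixes p l :: real assumes p: "p > 0" and l: "l > 0"
  shows "(\<integral>\<^sup>+t. ennreal (indicator {0..} t * t powr (p - 1) / exp (l * t)) \<partial>lborel)
         = ennreal (Gamma p / l powr p)"
proof -
  have "ennreal (Gamma p) = (\<integral>\<^sup>+t. ennreal (indicator {0..} t * t powr (p - 1) / exp t) \<partial>lborel)"
    using Gamma_conv_nn_integral_real[OF p] by simp
  also have "\<dots> = ennreal \<bar>l\<bar> * (\<integral>\<^sup>+r. ennreal (indicator {0..} (0 + l * r) * (0 + l * r) powr (p - 1) / exp (0 + l * r)) \<partial>lborel)"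
    by (rule nn_integral_real_affine) (use l in auto)
  also have "\<dots> = ennreal \<bar>l\<bar> * (\<integral>\<^sup>+r. ennreal (l powr (p - 1)) * ennreal (indicator {0..} r * r powr (p - 1) / exp (l * r)) \<partial>lborel)"
    using l by (intro arg_cong2[where f="(*)"] refl nn_integral_cong)
       (auto simp: indicator_def powr_mult ennreal_mult'[symmetric] zero_le_mult_iff)
  also have "\<dots> = ennreal (l * l powr (p - 1)) * (\<integral>\<^sup>+r. ennreal (indicator {0..} r * r powr (p - 1) / exp (l * r)) \<partial>lborel)"
    using l by (subst nn_integral_cmult) (auto simp: ennreal_mult mult.assoc)
  also have "l * l powr (p - 1) = l powr p" using l by (simp add: powr_diff)
  finally have "ennreal (Gamma p) = ennreal (l powr p) * (\<integral>\<^sup>+r. ennreal (indicator {0..} r * r powr (p - 1) / exp (l * r)) \<partial>lborel)" .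
  hence "ennreal (Gamma p) / ennreal (l powr p) = (\<integral>\<^sup>+r. ennreal (indicator {0..} r * r powr (p - 1) / exp (l * r)) \<partial>lborel)"
    using l by (subst ennreal_mult_divide_eq[symmetric]) (auto simp: mult.commute)
  thus ?thesis using l p Gamma_real_pos[OF p] by (simp add: divide_ennreal)
qed

lemma beta_inf:
  fixes a b :: real assumes a: "a > 0" and b: "b > 0"
  shows "(\<integral>\<^sup>+w. ennreal (indicator {0..} w * w powr (a - 1) * (1 + w) powr (-(a + b))) \<partial>lborel)
         = ennreal (Gamma a * Gamma b / Gamma (a + b))"
proof -
  have gab: "Gamma (a + b) > 0" using a b by (intro Gamma_real_pos) auto
  have pm: "(1 + w) powr (- a - b) = inverse ((1 + w) powr (a + b))" for w :: real
    using powr_minus[of "1 + w" "a + b"] by simp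
  have "(\<integral>\<^sup>+w. ennreal (indicator {0..} w * w powr (a - 1) * (1 + w) powr (-(a + b))) \<partial>lborel) * ennreal (Gamma (a + b))
      = (\<integral>\<^sup>+w. ennreal (indicator {0..} w * w powr (a - 1)) * ennreal (Gamma (a + b) / (1 + w) powr (a + b)) \<partial>lborel)"
  proof (subst nn_integral_multc[symmetric], simp, intro nn_integral_cong)
    fix w :: real
    show "ennreal (indicator {0..} w * w powr (a - 1) * (1 + w) powr (-(a + b))) * ennreal (Gamma (a + b)) =
          ennreal (indicator {0..} w * w powr (a - 1)) * ennreal (Gamma (a + b) / (1 + w) powr (a + b))"
    proof (cases "w \<ge> 0")
      case True
      have "ennreal (indicator {0..} w * w powr (a - 1) * (1 + w) powr (-(a + b))) * ennreal (Gamma (a + b))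
          = ennreal (indicator {0..} w * w powr (a - 1) * (1 + w) powr (-(a + b)) * Gamma (a + b))"
        using True gab by (subst ennreal_mult) auto
      also have "\<dots> = ennreal (indicator {0..} w * w powr (a - 1) * (Gamma (a + b) / (1 + w) powr (a + b)))"
        using True by (simp add: pm divide_inverse mult_ac)
      also have "\<dots> = ennreal (indicator {0..} w * w powr (a - 1)) * ennreal (Gamma (a + b) / (1 + w) powr (a + b))"
        using True gab by (subst ennreal_mult) auto
      finally show ?thesis .
    qed (simp add: indicator_def)
  qed
  also have "\<dots> = (\<integral>\<^sup>+w. ennreal (indicator {0..} w * w powr (a - 1)) * 
        (\<integral>\<^sup>+t. ennreal (indicator {0..} t * t powr (a + b - 1) / exp ((1 + w) * t)) \<partial>lborel) \<partial>lborel)"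
  proof (intro nn_integral_cong)
    fix w :: real
    show "ennreal (indicator {0..} w * w powr (a - 1)) * ennreal (Gamma (a + b) / (1 + w) powr (a + b)) =
          ennreal (indicator {0..} w * w powr (a - 1)) *
          (\<integral>\<^sup>+t. ennreal (indicator {0..} t * t powr (a + b - 1) / exp ((1 + w) * t)) \<partial>lborel)"
    proof (cases "w \<ge> 0")
      case True
      then show ?thesis using gamma_scaled[of "a + b" "1 + w"] a b by simp
    qed (simp add: indicator_def)
  qed
  also have "\<dots> = (\<integral>\<^sup>+w. \<integral>\<^sup>+t. ennreal (indicator {0..} w * w powr (a - 1) * (indicator {0..} t * t powr (a + b - 1) / exp ((1 + w) * t))) \<partial>lborel \<partial>lborel)"
    by (subst nn_integral_cmult[symmetric]) (auto intro!: nn_integral_cong simp: ennreal_mult'[symmetric] indicator_def)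
  also have "\<dots> = (\<integral>\<^sup>+t. \<integral>\<^sup>+w. ennreal (indicator {0..} w * w powr (a - 1) * (indicator {0..} t * t powr (a + b - 1) / exp ((1 + w) * t))) \<partial>lborel \<partial>lborel)"
    by (subst lborel_pair.Fubini') (auto simp: case_prod_unfold)
  also have "\<dots> = (\<integral>\<^sup>+t. ennreal (indicator {0<..} t * t powr (a + b - 1) / exp t) * 
        (\<integral>\<^sup>+w. ennreal (indicator {0..} w * w powr (a - 1) / exp (t * w)) \<partial>lborel) \<partial>lborel)"
  proof (intro nn_integral_cong_AE eventually_mono[OF AE_lborel_singleton[of 0]])
    fix t :: real assume t0: "t \<noteq> 0"
    show "(\<integral>\<^sup>+w. ennreal (indicator {0..} w * w powr (a - 1) * (indicator {0..} t * t powr (a + b - 1) / exp ((1 + w) * t))) \<partial>lborel) =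
       ennreal (indicator {0<..} t * t powr (a + b - 1) / exp t) * (\<integral>\<^sup>+w. ennreal (indicator {0..} w * w powr (a - 1) / exp (t * w)) \<partial>lborel)"
      using t0 by (subst nn_integral_cmult[symmetric])
        (auto intro!: nn_integral_cong simp: ennreal_mult'[symmetric] indicator_def algebra_simps exp_add)
  qed
  also have "\<dots> = (\<integral>\<^sup>+t. ennreal (Gamma a) * ennreal (indicator {0..} t * t powr (b - 1) / exp t) \<partial>lborel)"
  proof (intro nn_integral_cong_AE eventually_mono[OF AE_lborel_singleton[of 0]])
    fix t :: real assume t0: "t \<noteq> 0"
    show "ennreal (indicator {0<..} t * t powr (a + b - 1) / exp t) * (\<integral>\<^sup>+w. ennreal (indicator {0..} w * w powr (a - 1) / exp (t * w)) \<partial>lborel)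
        = ennreal (Gamma a) * ennreal (indicator {0..} t * t powr (b - 1) / exp t)"
    proof (cases "t > 0")
      case True
      have "ennreal (indicator {0<..} t * t powr (a + b - 1) / exp t) * ennreal (Gamma a / t powr a)
          = ennreal (t powr (a + b - 1) / exp t * (Gamma a / t powr a))"
        using True a by (subst ennreal_mult'[symmetric]) (auto simp: Gamma_real_pos)
      also have "t powr (a + b - 1) / exp t * (Gamma a / t powr a) = Gamma a * (t powr (b - 1) / exp t)"
        using True by (simp add: powr_add powr_diff field_simps)
      finally show ?thesis using True a gamma_scaled[OF a True]
        by (simp add: ennreal_mult'[symmetric] Gamma_real_pos indicator_def)
    qed (use t0 in \<open>auto simp: indicator_def\<close>)
  qed
  also have "\<dots> = ennreal (Gamma a * Gamma b)"
    using a b by (subst nn_integral_cmult) (auto simp: Gamma_conv_nn_integral_real[symmetric] ennreal_mult Gamma_real_pos)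
  finally have eq: "(\<integral>\<^sup>+w. ennreal (indicator {0..} w * w powr (a - 1) * (1 + w) powr (-(a + b))) \<partial>lborel) * ennreal (Gamma (a + b)) = ennreal (Gamma a * Gamma b)" .
  define X where "X = (\<integral>\<^sup>+w. ennreal (indicator {0..} w * w powr (a - 1) * (1 + w) powr (-(a + b))) \<partial>lborel)"
  have "X = X * ennreal (Gamma (a + b)) / ennreal (Gamma (a + b))" using gab by (simp add: ennreal_mult_divide_eq)
  also have "\<dots> = ennreal (Gamma a * Gamma b) / ennreal (Gamma (a + b))" using eq by (simp add: X_def)
  also have "\<dots> = ennreal (Gamma a * Gamma b / Gamma (a + b))" using gab a b by (simp add: divide_ennreal Gamma_real_pos)
  finally show ?thesis by (simp add: X_def)
qed

lemma pow_tail: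
  fixes w al :: real assumes w: "w > 0" and al: "al > 1"
  shows "(\<integral>\<^sup>+u. ennreal (indicator {w..} u * u powr (-al)) \<partial>lborel) = ennreal (w powr (1 - al) / (al - 1))"
proof -
  have "((\<lambda>x. x powr (-al)) has_integral -(w powr (-al+1)) / (-al+1)) {w..}"
    using has_integral_powr_to_inf[of "-al" w] w al by simp
  moreover have "-(w powr (-al+1)) / (-al+1) = w powr (1 - al) / (al - 1)"
    by (simp add: minus_divide_right)
  ultimately have "((\<lambda>x. x powr (-al)) has_integral w powr (1 - al) / (al - 1)) {w..}"
    by simp
  from nn_integral_has_integral_lebesgue[OF _ this] show ?thesis using w by simp
qed

lemma pow_head:
  fixes d q :: real assumes d: "d \<ge> 0" and q: "q > -1"
  shows "(\<integral>\<^sup>+u. ennreal (indicator {0..d} u * u powr q) \<partial>lborel) = ennreal (d powr (q + 1) / (q + 1))"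
  using nn_integral_has_integral_lebesgue[OF _ has_integral_powr_from_0[OF q d]] by simp

definition Wf :: "real \<Rightarrow> real \<Rightarrow> real" where
  "Wf nu u = ((1 + u) powr (nu - 1) - 1) / (nu - 1)"

definition Gf :: "real \<Rightarrow> real \<Rightarrow> real" where
  "Gf nu v = ((1 + v) powr nu - 1 - nu * v) / (nu * (nu - 1))"

lemma W_has_integral:
  assumes nu: "nu \<noteq> 1" and u: "u \<ge> 0"
  shows "((\<lambda>w. (1 + w) powr (nu - 2)) has_integral Wf nu u) {0..u}"
proof -
  have "((\<lambda>w. (1 + w) powr (nu - 2)) has_integral (Wf nu u - Wf nu 0)) {0..u}"
  proof (rule fundamental_theorem_of_calculus[OF u])
    fix x assume x: "x \<in> {0..u}"
    have "((\<lambda>w. ((1 + w) powr (nu - 1) - 1) / (nu - 1)) has_real_derivative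
           ((nu - 1) * (1 + x) powr (nu - 1 - 1) * 1 - 0) / (nu - 1)) (at x)"
      using x nu by (intro derivative_eq_intros) auto
    moreover have "((nu - 1) * (1 + x) powr (nu - 1 - 1) * 1 - 0) / (nu - 1) = (1 + x) powr (nu - 2)"
      using nu by (simp add: field_simps)
    ultimately have "(Wf nu has_real_derivative (1 + x) powr (nu - 2)) (at x)"
      unfolding Wf_def by simp
    thus "(Wf nu has_vector_derivative (1 + x) powr (nu - 2)) (at x within {0..u})"
      by (simp add: has_real_derivative_iff_has_vector_derivative has_vector_derivative_at_within)
  qed
  thus ?thesis by (simp add: Wf_def)
qed

lemma G_has_integral:
  assumes nu: "nu \<noteq> 1" "nu \<noteq> 0" and v: "v \<ge> 0"
  shows "(Wf nu has_integral Gf nu v) {0..v}"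
proof -
  have "(Wf nu has_integral (Gf nu v - Gf nu 0)) {0..v}"
  proof (rule fundamental_theorem_of_calculus[OF v])
    fix x assume x: "x \<in> {0..v}"
    have "((\<lambda>v. ((1 + v) powr nu - 1 - nu * v) / (nu * (nu - 1))) has_real_derivative
           ((nu * (1 + x) powr (nu - 1) * 1 - 0 - nu * 1) / (nu * (nu - 1)))) (at x)"
      using x nu by (intro derivative_eq_intros) auto
    moreover have "((nu * (1 + x) powr (nu - 1) * 1 - 0 - nu * 1) / (nu * (nu - 1))) = Wf nu x"
      using nu unfolding Wf_def by (simp add: field_simps)
    ultimately have "(Gf nu has_real_derivative Wf nu x) (at x)"
      unfolding Gf_def by simp
    thus "(Gf nu has_vector_derivative Wf nu x) (at x within {0..v})"
      by (simp add: has_real_derivative_iff_has_vector_derivative has_vector_derivative_at_within)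
  qed
  thus ?thesis by (simp add: Gf_def)
qed

lemma Wf_nonneg:
  assumes "u \<ge> 0" shows "Wf nu u \<ge> 0"
proof (cases "nu > 1")
  case True
  have "(1 + u) powr (nu - 1) \<ge> 1" using assms True by (simp add: ge_one_powr_ge_zero)
  thus ?thesis using True by (simp add: Wf_def)
next
  case False
  have "(1 + u) powr (nu - 1) \<le> 1 powr (nu - 1)"
    using assms False by (intro powr_mono2') auto
  thus ?thesis using False by (cases "nu = 1") (auto simp: Wf_def divide_nonpos_neg)
qed

lemma Wf_le:
  assumes nu: "nu \<noteq> 1" "nu < 2" and u: "u \<ge> 0" shows "Wf nu u \<le> u"
proof -
  have "((\<lambda>w. 1::real) has_integral u) {0..u}"
    using has_integral_const_real[of "1::real" 0 u] u by simp
  thus ?thesis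
  proof (rule has_integral_le[OF W_has_integral[OF nu(1) u]])
    fix x assume "x \<in> {0..u}"
    hence "(1 + x) powr (nu - 2) \<le> (1 + x) powr 0" using nu by (intro powr_mono) auto
    thus "(1 + x) powr (nu - 2) \<le> 1" using \<open>x \<in> {0..u}\<close> by simp
  qed
qed

lemma W_nn:
  assumes nu: "nu \<noteq> 1" and u: "u \<ge> 0"
  shows "(\<integral>\<^sup>+w. ennreal (indicator {0..u} w * (1 + w) powr (nu - 2)) \<partial>lborel) = ennreal (Wf nu u)"
  using nn_integral_has_integral_lebesgue[OF _ W_has_integral[OF nu u]] by simp

lemma G_nn:
  assumes nu: "nu \<noteq> 1" "nu \<noteq> 0" and v: "v \<ge> 0"
  shows "(\<integral>\<^sup>+u. ennreal (indicator {0..v} u * Wf nu u) \<partial>lborel) = ennreal (Gf nu v)"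
  using nn_integral_has_integral_lebesgue[OF _ G_has_integral[OF nu v]] Wf_nonneg by simp

lemma L_value:
  fixes al nu :: real
  assumes al: "1 < al" "al < 2" and nu: "nu < al" "nu \<noteq> 1"
  shows "(\<integral>\<^sup>+u. ennreal (indicator {0<..} u * Wf nu u * u powr (-al)) \<partial>lborel)
       = ennreal (Gamma (2 - al) * Gamma (al - nu) / Gamma (2 - nu) / (al - 1))"
proof -
  have "(\<integral>\<^sup>+u. ennreal (indicator {0<..} u * Wf nu u * u powr (-al)) \<partial>lborel)
      = (\<integral>\<^sup>+u. \<integral>\<^sup>+w. ennreal (if 0 < u \<and> 0 \<le> w \<and> w \<le> u then u powr (-al) * (1 + w) powr (nu - 2) else 0) \<partial>lborel \<partial>lborel)"
  proof (intro nn_integral_cong)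
    fix u :: real
    show "ennreal (indicator {0<..} u * Wf nu u * u powr (-al)) =
      (\<integral>\<^sup>+w. ennreal (if 0 < u \<and> 0 \<le> w \<and> w \<le> u then u powr (-al) * (1 + w) powr (nu - 2) else 0) \<partial>lborel)"
    proof (cases "u > 0")
      case True
      have "(\<integral>\<^sup>+w. ennreal (if 0 < u \<and> 0 \<le> w \<and> w \<le> u then u powr (-al) * (1 + w) powr (nu - 2) else 0) \<partial>lborel)
          = (\<integral>\<^sup>+w. ennreal (u powr (-al)) * ennreal (indicator {0..u} w * (1 + w) powr (nu - 2)) \<partial>lborel)"
        using True by (intro nn_integral_cong) (auto simp: indicator_def ennreal_mult)
      also have "\<dots> = ennreal (u powr (-al)) * ennreal (Wf nu u)"
        using True nu by (subst nn_integral_cmult) (auto simp: W_nn)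
      also have "\<dots> = ennreal (indicator {0<..} u * Wf nu u * u powr (-al))"
        using True Wf_nonneg[of u nu] by (simp add: ennreal_mult[symmetric] mult_ac)
      finally show ?thesis by simp
    qed (simp add: indicator_def)
  qed
  also have "\<dots> = (\<integral>\<^sup>+w. \<integral>\<^sup>+u. ennreal (if 0 < u \<and> 0 \<le> w \<and> w \<le> u then u powr (-al) * (1 + w) powr (nu - 2) else 0) \<partial>lborel \<partial>lborel)"
    by (subst lborel_pair.Fubini') (auto simp: case_prod_unfold)
  also have "\<dots> = (\<integral>\<^sup>+w. ennreal (1 / (al - 1)) * ennreal (indicator {0..} w * w powr ((2 - al) - 1) * (1 + w) powr (-((2 - al) + (al - nu)))) \<partial>lborel)"
  proof (intro nn_integral_cong_AE eventually_mono[OF AE_lborel_singleton[of 0]])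
    fix w :: real assume w0: "w \<noteq> 0"
    show "(\<integral>\<^sup>+u. ennreal (if 0 < u \<and> 0 \<le> w \<and> w \<le> u then u powr (-al) * (1 + w) powr (nu - 2) else 0) \<partial>lborel)
        = ennreal (1 / (al - 1)) * ennreal (indicator {0..} w * w powr ((2 - al) - 1) * (1 + w) powr (-((2 - al) + (al - nu))))"
    proof (cases "w > 0")
      case True
      have "(\<integral>\<^sup>+u. ennreal (if 0 < u \<and> 0 \<le> w \<and> w \<le> u then u powr (-al) * (1 + w) powr (nu - 2) else 0) \<partial>lborel)
          = (\<integral>\<^sup>+u. ennreal ((1 + w) powr (nu - 2)) * ennreal (indicator {w..} u * u powr (-al)) \<partial>lborel)"
        using True by (intro nn_integral_cong) (auto simp: indicator_def ennreal_mult[symmetric] mult_ac)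
      also have "\<dots> = ennreal ((1 + w) powr (nu - 2)) * ennreal (w powr (1 - al) / (al - 1))"
        using True al by (subst nn_integral_cmult) (auto simp: pow_tail)
      also have "\<dots> = ennreal (1 / (al - 1)) * ennreal (indicator {0..} w * w powr ((2 - al) - 1) * (1 + w) powr (-((2 - al) + (al - nu))))"
        using True al by (simp add: ennreal_mult[symmetric] field_simps)
      finally show ?thesis .
    qed (use w0 in \<open>auto simp: indicator_def\<close>)
  qed
  also have "\<dots> = ennreal (1 / (al - 1)) * ennreal (Gamma (2 - al) * Gamma (al - nu) / Gamma (2 - al + (al - nu)))"
    using al nu beta_inf[of "2 - al" "al - nu"] by (subst nn_integral_cmult) auto
  also have "\<dots> = ennreal (Gamma (2 - al) * Gamma (al - nu) / Gamma (2 - nu) / (al - 1))"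
    using al nu by (subst ennreal_mult[symmetric]) (auto simp: Gamma_real_pos)
  finally show ?thesis .
qed

lemma layer_cake:
  fixes M :: "real measure" and T w :: "real \<Rightarrow> real"
  assumes P: "prob_space M" and sM: "sets M = sets borel"
    and T[measurable]: "T \<in> borel_measurable borel" and w[measurable]: "w \<in> borel_measurable borel"
  shows "(\<integral>\<^sup>+z. (\<integral>\<^sup>+u. ennreal (if 0 < u \<and> u < T z then w u else 0) \<partial>lborel) \<partial>M)
       = (\<integral>\<^sup>+u. ennreal (indicator {0<..} u * w u) * emeasure M {z. u < T z} \<partial>lborel)"
proof -
  have PS: "pair_sigma_finite M lborel"
    unfolding pair_sigma_finite_def using prob_space_imp_sigma_finite[OF P] sigma_finite_lborel by auto
  have spM: "space M = UNIV" using sets_eq_imp_space_eq[OF sM] by simp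
  have meas: "(\<lambda>(z, u). ennreal (if 0 < u \<and> u < T z then w u else 0)) \<in> borel_measurable (M \<Otimes>\<^sub>M lborel)"
  proof -
    have m: "(\<lambda>(z, u). ennreal (if 0 < u \<and> u < T z then w u else 0)) \<in> borel_measurable (borel \<Otimes>\<^sub>M lborel)"
      by measurable
    have eqs: "sets (M \<Otimes>\<^sub>M lborel) = sets (borel \<Otimes>\<^sub>M lborel)"
      by (rule sets_pair_measure_cong[OF sM refl])
    show ?thesis using m by (subst measurable_cong_sets[OF eqs refl])
  qed
  have "(\<integral>\<^sup>+z. (\<integral>\<^sup>+u. ennreal (if 0 < u \<and> u < T z then w u else 0) \<partial>lborel) \<partial>M)
      = (\<integral>\<^sup>+u. (\<integral>\<^sup>+z. ennreal (if 0 < u \<and> u < T z then w u else 0) \<partial>M) \<partial>lborel)"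
    using pair_sigma_finite.Fubini'[OF PS meas] by simp
  also have "\<dots> = (\<integral>\<^sup>+u. ennreal (indicator {0<..} u * w u) * emeasure M {z. u < T z} \<partial>lborel)"
  proof (intro nn_integral_cong)
    fix u :: real
    have "{z. u < T z} \<in> sets M" using sM by simp
    have "(\<integral>\<^sup>+z. ennreal (if 0 < u \<and> u < T z then w u else 0) \<partial>M)
        = (\<integral>\<^sup>+z. ennreal (indicator {0<..} u * w u) * indicator {z. u < T z} z \<partial>M)"
      by (intro nn_integral_cong) (auto simp: indicator_def)
    also have "\<dots> = ennreal (indicator {0<..} u * w u) * emeasure M {z. u < T z}"
      using \<open>{z. u < T z} \<in> sets M\<close> by (simp add: nn_integral_cmult_indicator)
    finally show "(\<integral>\<^sup>+z. ennreal (if 0 < u \<and> u < T z then w u else 0) \<partial>M) = ennreal (indicator {0<..} u * w u) * emeasure M {z. u < T z}" .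
  qed
  finally show ?thesis .
qed

definition Lc :: "real \<Rightarrow> real \<Rightarrow> real" where
  "Lc al nu = Gamma (2 - al) * Gamma (al - nu) / Gamma (2 - nu) / (al - 1)"

lemma pospart_max: "pospart y = max y 0" by (simp add: pospart_def max_def)
lemma negpart_max: "negpart y = max (-y) 0" by (simp add: negpart_def max_def)

lemma Wf_meas[measurable]: "Wf nu \<in> borel_measurable borel"
  unfolding Wf_def by measurable
lemma Gf_meas[measurable]: "Gf nu \<in> borel_measurable borel"
  unfolding Gf_def by measurable

lemma Gf_nonneg:
  assumes nu: "nu \<noteq> 1" "nu \<noteq> 0" and v: "v \<ge> 0" shows "Gf nu v \<ge> 0"
  using has_integral_nonneg[OF G_has_integral[OF nu v]] Wf_nonneg by auto

lemma Lc_nonneg: assumes "1 < al" "al < 2" "nu < al" shows "Lc al nu \<ge> 0"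
  using assms by (auto simp: Lc_def Gamma_real_pos intro!: divide_nonneg_pos mult_nonneg_nonneg less_imp_le)

lemma pos_single:
  fixes M :: "real measure" and T :: "real \<Rightarrow> real"
  assumes nu: "nu \<noteq> 0" "nu \<noteq> 1" "nu < al" and al: "1 < al" "al < 2" and c: "c \<ge> 0"
    and P: "prob_space M" and sM: "sets M = sets borel" and T[measurable]: "T \<in> borel_measurable borel"
    and H1: "\<And>y. y > 0 \<Longrightarrow> y powr al * measure M {z. y < T z} \<le> Mb"
    and H2: "\<And>y. y \<ge> Y \<Longrightarrow> \<bar>y powr al * measure M {z. y < T z} - c\<bar> \<le> eps"
    and s: "s > 0" and dl: "dl > 0" "s * dl \<ge> Y"
  shows "integrable M (\<lambda>z. Gf nu (pospart (T z) / s)) \<and>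
         \<bar>s powr al * (\<integral>z. Gf nu (pospart (T z) / s) \<partial>M) - c * Lc al nu\<bar>
           \<le> eps * Lc al nu + (Mb + c) * (dl powr (2 - al) / (2 - al))"
proof -
  interpret prob_space M by (rule P)
  have spM: "space M = UNIV" using sets_eq_imp_space_eq[OF sM] by simp
  have eps0: "eps \<ge> 0" using H2[of "max Y 1"] by linarith
  have Mb0: "Mb \<ge> 0"
  proof -
    have a: "0 \<le> measure M {z. 1 < T z}" by simp
    have b: "measure M {z. 1 < T z} \<le> Mb" using H1[of 1] by simp
    from a b show ?thesis by linarith
  qed
  define k where "k u = indicator {0<..} u * Wf nu u * u powr (-al)" for u :: real
  define Q where "Q y = measure M {z. y < T z}" for y :: real
  define ph where "ph y = y powr al * Q y" for y :: real
  have Qmono: "mono (\<lambda>y. - Q y)"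
  proof (rule monoI)
    fix y1 y2 :: real assume "y1 \<le> y2"
    hence "{z. y2 < T z} \<subseteq> {z. y1 < T z}" by auto
    hence "Q y2 \<le> Q y1" unfolding Q_def using sM by (intro finite_measure_mono) auto
    thus "- Q y1 \<le> - Q y2" by simp
  qed
  have Qm[measurable]: "Q \<in> borel_measurable borel"
    using borel_measurable_uminus[OF borel_measurable_mono[OF Qmono]] by simp
  have km[measurable]: "k \<in> borel_measurable borel" unfolding k_def by measurable
  have k0: "k u \<ge> 0" for u using Wf_nonneg[of u nu] by (auto simp: k_def indicator_def)
  have kN: "(\<integral>\<^sup>+u. ennreal (k u) \<partial>lborel) = ennreal (Lc al nu)"
    unfolding k_def Lc_def using L_value[of al nu] al nu by simp
  have kint: "integrable lborel k"
    by (rule integrableI_nn_integral_finite[OF km[folded measurable_lborel2] _ kN]) (simp add: k0)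
  have kI: "integral\<^sup>L lborel k = Lc al nu"
    using nn_integral_eq_integral[OF kint] kN Lc_nonneg[OF al nu(3)] integral_nonneg_AE[of k lborel] k0
    by auto
  have ph_bd: "0 \<le> ph y \<and> ph y \<le> Mb" if "y > 0" for y
    using H1[OF that] that by (auto simp: ph_def Q_def)
  define R where "R u = k u * ph (s * u)" for u
  have Rm[measurable]: "R \<in> borel_measurable borel" unfolding R_def ph_def by measurable
  have R0: "R u \<ge> 0" for u
    using k0[of u] ph_bd[of "s * u"] s by (cases "u > 0") (auto simp: R_def k_def zero_less_mult_iff)
  have Rint: "integrable lborel R"
  proof (rule Bochner_Integration.integrable_bound[OF integrable_mult_right[OF kint, of Mb] Rm[folded measurable_lborel2]])
    show "AE x in lborel. norm (R x) \<le> norm (Mb * k x)"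
    proof (intro AE_I2)
      fix u :: real
      show "norm (R u) \<le> norm (Mb * k u)"
      proof (cases "u > 0")
        case True
        hence "ph (s * u) \<le> Mb" "0 \<le> ph (s * u)" using ph_bd[of "s * u"] s by auto
        hence "k u * ph (s * u) \<le> k u * Mb" using k0[of u] by (intro mult_left_mono) auto
        thus ?thesis using k0[of u] Mb0 \<open>0 \<le> ph (s * u)\<close> by (simp add: R_def abs_mult mult.commute)
      qed (auto simp: R_def k_def)
    qed
  qed
  have RN: "(\<integral>\<^sup>+u. ennreal (R u) \<partial>lborel) = ennreal (integral\<^sup>L lborel R)"
    by (rule nn_integral_eq_integral[OF Rint]) (simp add: R0)
  have RI0: "integral\<^sup>L lborel R \<ge> 0" using integral_nonneg_AE[of R lborel] R0 by auto
  have nnG: "ennreal (Gf nu (pospart (T z) / s)) = (\<integral>\<^sup>+u. ennreal (if 0 < u \<and> u < T z / s then Wf nu u else 0) \<partial>lborel)" for z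
  proof -
    define v where "v = pospart (T z) / s"
    have v0: "v \<ge> 0" using s by (simp add: v_def pospart_def)
    have "ennreal (Gf nu v) = (\<integral>\<^sup>+u. ennreal (indicator {0..v} u * Wf nu u) \<partial>lborel)"
      using G_nn[OF nu(2) nu(1) v0] by simp
    also have "\<dots> = (\<integral>\<^sup>+u. ennreal (if 0 < u \<and> u < T z / s then Wf nu u else 0) \<partial>lborel)"
    proof (intro nn_integral_cong_AE)
      have "AE u in lborel. u \<noteq> 0 \<and> u \<noteq> v"
        using AE_lborel_singleton[of 0] AE_lborel_singleton[of v] by eventually_elim auto
      thus "AE u in lborel. ennreal (indicator {0..v} u * Wf nu u) = ennreal (if 0 < u \<and> u < T z / s then Wf nu u else 0)"
      proof eventually_elim
        case (elim u)
        show ?case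
        proof (cases "T z > 0")
          case True
          hence "v = T z / s" by (simp add: v_def pospart_def)
          thus ?thesis using elim by (auto simp: indicator_def)
        next
          case False
          hence "v = 0" "T z / s \<le> 0" using s by (auto simp: v_def pospart_def divide_nonpos_pos)
          thus ?thesis using elim by (auto simp: indicator_def)
        qed
      qed
    qed
    finally show ?thesis by (simp add: v_def)
  qed
  have Tm: "(\<lambda>z. T z / s) \<in> borel_measurable borel" by measurable
  have Gsum: "(\<integral>\<^sup>+z. ennreal (Gf nu (pospart (T z) / s)) \<partial>M) = ennreal (s powr (-al) * integral\<^sup>L lborel R)"
  proof -
    have "(\<integral>\<^sup>+z. ennreal (Gf nu (pospart (T z) / s)) \<partial>M)
        = (\<integral>\<^sup>+z. (\<integral>\<^sup>+u. ennreal (if 0 < u \<and> u < T z / s then Wf nu u else 0) \<partial>lborel) \<partial>M)"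
      by (intro nn_integral_cong) (rule nnG)
    also have "\<dots> = (\<integral>\<^sup>+u. ennreal (indicator {0<..} u * Wf nu u) * emeasure M {z. u < T z / s} \<partial>lborel)"
      by (rule layer_cake[OF P sM Tm Wf_meas])
    also have "\<dots> = (\<integral>\<^sup>+u. ennreal (s powr (-al)) * ennreal (R u) \<partial>lborel)"
    proof (intro nn_integral_cong)
      fix u :: real
      show "ennreal (indicator {0<..} u * Wf nu u) * emeasure M {z. u < T z / s} = ennreal (s powr (-al)) * ennreal (R u)"
      proof (cases "u > 0")
        case True
        have set: "{z. u < T z / s} = {z. s * u < T z}" using s by (auto simp: field_simps)
        have em: "emeasure M {z. u < T z / s} = ennreal (Q (s * u))"
          unfolding set Q_def using sM by (simp add: emeasure_eq_measure)
        have "s powr (-al) * R u = Wf nu u * Q (s * u)"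
          using True s by (simp add: R_def k_def ph_def powr_mult powr_minus field_simps)
        thus ?thesis using True em Wf_nonneg[of u nu] s R0[of u]
          by (simp add: ennreal_mult[symmetric] Q_def)
      qed (simp add: R_def k_def)
    qed
    also have "\<dots> = ennreal (s powr (-al)) * ennreal (integral\<^sup>L lborel R)"
      by (subst nn_integral_cmult) (auto simp: RN)
    also have "\<dots> = ennreal (s powr (-al) * integral\<^sup>L lborel R)"
      using RI0 by (simp add: ennreal_mult)
    finally show ?thesis .
  qed
  have Gm: "(\<lambda>z. Gf nu (pospart (T z) / s)) \<in> borel_measurable M"
  proof -
    have "(\<lambda>z. Gf nu (max (T z) 0 / s)) \<in> borel_measurable borel" by measurable
    thus ?thesis by (simp add: measurable_cong_sets[OF sM refl] pospart_max)
  qed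
  have G0: "Gf nu (pospart (T z) / s) \<ge> 0" for z
    using Gf_nonneg[OF nu(2) nu(1)] s by (simp add: pospart_def)
  have Gint: "integrable M (\<lambda>z. Gf nu (pospart (T z) / s))"
    by (rule integrableI_nn_integral_finite[OF Gm _ Gsum]) (simp add: G0)
  have GI: "(\<integral>z. Gf nu (pospart (T z) / s) \<partial>M) = s powr (-al) * integral\<^sup>L lborel R"
    using nn_integral_eq_integral[OF Gint] Gsum G0 integral_nonneg_AE[of "\<lambda>z. Gf nu (pospart (T z) / s)" M] RI0
    by auto
  have sGI: "s powr al * (\<integral>z. Gf nu (pospart (T z) / s) \<partial>M) = integral\<^sup>L lborel R"
    using s by (simp add: GI powr_minus)
  define h where "h u = indicator {0..dl} u * u powr (1 - al)" for u :: real
  have hm[measurable]: "h \<in> borel_measurable borel" unfolding h_def by measurable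
  have h0: "h u \<ge> 0" for u by (simp add: h_def)
  have hN: "(\<integral>\<^sup>+u. ennreal (h u) \<partial>lborel) = ennreal (dl powr (2 - al) / (2 - al))"
    unfolding h_def using pow_head[of dl "1 - al"] dl al by simp
  have hint: "integrable lborel h"
    by (rule integrableI_nn_integral_finite[OF hm[folded measurable_lborel2] _ hN]) (simp add: h0)
  have hI: "integral\<^sup>L lborel h = dl powr (2 - al) / (2 - al)"
    using nn_integral_eq_integral[OF hint] hN integral_nonneg_AE[of h lborel] h0 dl al by auto
  define B where "B u = eps * k u + (Mb + c) * h u" for u
  have Bint: "integrable lborel B" unfolding B_def using kint hint by auto
  have BI: "integral\<^sup>L lborel B = eps * Lc al nu + (Mb + c) * (dl powr (2 - al) / (2 - al))"
    unfolding B_def using kint hint kI hI by simp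
  have diffint: "integrable lborel (\<lambda>u. R u - c * k u)" using Rint kint by auto
  have "\<bar>integral\<^sup>L lborel R - c * Lc al nu\<bar> = \<bar>\<integral>u. (R u - c * k u) \<partial>lborel\<bar>"
    using Rint kint kI by simp
  also have "\<dots> \<le> integral\<^sup>L lborel B"
  proof (rule integral_abs_bound_integral[OF diffint Bint])
    fix u :: real
    show "\<bar>R u - c * k u\<bar> \<le> B u"
    proof (cases "u > 0")
      case False thus ?thesis using h0[of u] Mb0 c by (simp add: R_def k_def B_def)
    next
      case True
      have eq: "R u - c * k u = k u * (ph (s * u) - c)" by (simp add: R_def algebra_simps)
      show ?thesis
      proof (cases "s * u \<ge> Y")
        case True
        have "\<bar>ph (s * u) - c\<bar> \<le> eps" using H2[OF True] by (simp add: ph_def Q_def)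
        hence "\<bar>R u - c * k u\<bar> \<le> k u * eps" unfolding eq using k0[of u] by (simp add: abs_mult mult_left_mono)
        thus ?thesis using h0[of u] Mb0 c by (simp add: B_def mult.commute add_increasing2)
      next
        case False
        hence ud: "u \<le> dl" using dl s by (smt (verit) mult_left_mono)
        have pb: "0 \<le> ph (s * u)" "ph (s * u) \<le> Mb" using ph_bd[of "s * u"] s True by auto
        have "\<bar>ph (s * u) - c\<bar> \<le> Mb + c" using pb c by linarith
        moreover have "k u \<le> u powr (1 - al)"
        proof -
          have "k u = Wf nu u * u powr (-al)" using True by (simp add: k_def)
          also have "\<dots> \<le> u * u powr (-al)"
            using Wf_le[of nu u] nu al True by (intro mult_right_mono) auto
          also have "\<dots> = u powr (1 - al)" using True by (simp add: powr_diff powr_minus field_simps)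
          finally show ?thesis .
        qed
        ultimately have "\<bar>R u - c * k u\<bar> \<le> u powr (1 - al) * (Mb + c)"
          unfolding eq using k0[of u] by (simp add: abs_mult mult_mono)
        moreover have "h u = u powr (1 - al)" using True ud by (simp add: h_def)
        ultimately show ?thesis using k0[of u] eps0 by (simp add: B_def mult.commute add_increasing)
      qed
    qed
  qed
  finally show ?thesis using Gint sGI BI by simp
qed

lemma taylor_neg:
  fixes nu u :: real
  assumes nu: "nu < 2" and u: "-1/2 \<le> u" "u \<le> 0"
  shows "\<bar>(1 + u) powr nu - 1 - nu * u\<bar> \<le> \<bar>nu * (nu - 1)\<bar> * 2 powr (2 - nu) * u^2"
proof (cases "u = 0")
  case True thus ?thesis by simp
next
  case False
  hence u0: "u < 0" using u by simp
  define g where "g v = (1 + v) powr nu - 1 - nu * v" for v :: real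
  define g' where "g' v = nu * (1 + v) powr (nu - 1) - nu" for v :: real
  define g'' where "g'' v = nu * ((nu - 1) * (1 + v) powr (nu - 2))" for v :: real
  have dg: "DERIV g x :> g' x" if "u \<le> x" "x \<le> 0" for x
  proof -
    have "DERIV g x :> (nu * (1 + x) powr (nu - 1) * (0 + 1) - 0 - nu * 1)"
      unfolding g_def using that u by (intro derivative_eq_intros) auto
    thus ?thesis by (simp add: g'_def)
  qed
  obtain xi where xi: "u < xi" "xi < 0" "g 0 - g u = (0 - u) * g' xi"
    using MVT2[OF u0 dg] by blast
  have dg': "DERIV g' x :> g'' x" if "xi \<le> x" "x \<le> 0" for x
  proof -
    have "DERIV g' x :> (nu * ((nu - 1) * (1 + x) powr (nu - 1 - 1) * (0 + 1)) - 0)"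
      unfolding g'_def using that xi u by (intro derivative_eq_intros) auto
    thus ?thesis by (simp add: g''_def)
  qed
  obtain eta where eta: "xi < eta" "eta < 0" "g' 0 - g' xi = (0 - xi) * g'' eta"
    using MVT2[OF xi(2) dg'] by blast
  have "1 + eta \<ge> 1/2" using eta xi u by simp
  hence pw: "(1 + eta) powr (nu - 2) \<le> (1/2) powr (nu - 2)"
    using nu by (intro powr_mono2') auto
  have half: "(1/2::real) powr (nu - 2) = 2 powr (2 - nu)"
  proof -
    have "(1/2::real) powr (nu - 2) = 1 / 2 powr (nu - 2)" by (simp add: powr_divide)
    also have "\<dots> = 2 powr (- (nu - 2))" by (simp only: powr_minus_divide)
    finally show ?thesis by simp
  qed
  have g'0: "g' 0 = 0" by (simp add: g'_def)
  have g0: "g 0 = 0" by (simp add: g_def)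
  have "\<bar>g'' eta\<bar> \<le> \<bar>nu * (nu - 1)\<bar> * 2 powr (2 - nu)"
  proof -
    have "\<bar>nu * (nu - 1)\<bar> * (1 + eta) powr (nu - 2) \<le> \<bar>nu * (nu - 1)\<bar> * 2 powr (2 - nu)"
      using pw half by (intro mult_left_mono) auto
    thus ?thesis by (simp add: g''_def abs_mult mult_ac)
  qed
  moreover have "\<bar>g u\<bar> = \<bar>u\<bar> * \<bar>xi\<bar> * \<bar>g'' eta\<bar>"
    using xi(3) eta(3) g'0 g0 by (simp add: abs_mult)
  moreover have "\<bar>u\<bar> * \<bar>xi\<bar> \<le> u^2" using xi u0 by (simp add: power2_eq_square mult_left_mono)
  ultimately have "\<bar>g u\<bar> \<le> u^2 * (\<bar>nu * (nu - 1)\<bar> * 2 powr (2 - nu))"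
    by (metis abs_ge_zero mult_mono zero_le_power2)
  thus ?thesis by (simp add: g_def mult_ac)
qed

lemma rpow_split:
  fixes s t x :: real assumes "s > 0"
  shows "(2 * \<bar>t\<bar> / s) powr x = 2 powr x * s powr (- x) * \<bar>t\<bar> powr x"
  using assms by (simp add: powr_divide powr_mult powr_minus_divide)

lemma hneg_bound:
  fixes F :: "real \<Rightarrow> real"
  assumes F1: "\<And>y. y \<ge> 1 \<Longrightarrow> F y = y powr nu"
    and F2: "\<And>y. \<bar>F y\<bar> \<le> 1 + (if nu \<ge> 0 then \<bar>y\<bar> powr nu else 0)"
    and s: "s \<ge> 2" and t: "t < 0" and nu: "nu < 2" "nu \<le> ga" and ga: "1 \<le> ga" "ga \<le> 2" and be: "be \<ge> 0"
  shows "\<bar>F (s + t) - s powr nu - nu * s powr (nu - 1) * t\<bar>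
     \<le> (\<bar>nu * (nu - 1)\<bar> * 2 powr (2 - nu) + (2 + \<bar>nu\<bar>) * 2 powr ga) * s powr (nu - ga) * \<bar>t\<bar> powr ga
        + 2 powr be * s powr (- be) * \<bar>t\<bar> powr be"
proof -
  define C2 where "C2 = \<bar>nu * (nu - 1)\<bar> * 2 powr (2 - nu)"
  define K1 where "K1 = C2 + (2 + \<bar>nu\<bar>) * 2 powr ga"
  have C20: "C2 \<ge> 0" by (simp add: C2_def)
  have s0: "s > 0" using s by simp
  have T1: "K1 * s powr (nu - ga) * \<bar>t\<bar> powr ga \<ge> 0" by (simp add: K1_def C2_def)
  have T2: "2 powr be * s powr (- be) * \<bar>t\<bar> powr be \<ge> 0" by simp
  have spl: "s powr (nu - ga) = s powr nu * s powr (- ga)" by (simp add: powr_diff powr_minus divide_inverse)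
  show ?thesis
  proof (cases "t \<ge> - s / 2")
    case True
    define u where "u = t / s"
    have u: "-1/2 \<le> u" "u \<le> 0" "u < 0" using True t s0 by (auto simp: u_def field_simps)
    have st: "s + t = s * (1 + u)" using s0 by (simp add: u_def field_simps)
    have "s + t \<ge> 1" using True s by simp
    hence Fst: "F (s + t) = s powr nu * (1 + u) powr nu"
      using F1 st u s0 by (simp add: powr_mult)
    have lin: "nu * s powr (nu - 1) * t = s powr nu * (nu * u)"
      using s0 by (simp add: u_def powr_diff field_simps)
    have "\<bar>F (s + t) - s powr nu - nu * s powr (nu - 1) * t\<bar> = s powr nu * \<bar>(1 + u) powr nu - 1 - nu * u\<bar>"
    proof -
      have "F (s + t) - s powr nu - nu * s powr (nu - 1) * t = s powr nu * ((1 + u) powr nu - 1 - nu * u)"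
        unfolding Fst lin by (simp add: algebra_simps)
      thus ?thesis by (simp add: abs_mult)
    qed
    also have "\<dots> \<le> s powr nu * (C2 * u^2)"
      using taylor_neg[OF nu(1) u(1,2)] by (intro mult_left_mono) (auto simp: C2_def)
    also have "u^2 \<le> \<bar>u\<bar> powr ga"
    proof -
      have "\<bar>u\<bar> powr 2 \<le> \<bar>u\<bar> powr ga" using u ga by (intro powr_mono') auto
      thus ?thesis by (simp add: powr_numeral[symmetric])
    qed
    hence "s powr nu * (C2 * u^2) \<le> s powr nu * (C2 * \<bar>u\<bar> powr ga)"
      using C20 by (intro mult_left_mono) auto
    also have "\<bar>u\<bar> powr ga = s powr (- ga) * \<bar>t\<bar> powr ga"
      using s0 by (simp add: u_def abs_divide powr_divide powr_minus_divide)
    also have "s powr nu * (C2 * (s powr (- ga) * \<bar>t\<bar> powr ga)) = C2 * s powr (nu - ga) * \<bar>t\<bar> powr ga"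
      by (simp add: spl mult_ac)
    also have "\<dots> \<le> K1 * s powr (nu - ga) * \<bar>t\<bar> powr ga"
      by (intro mult_right_mono) (auto simp: K1_def)
    finally show ?thesis using T2 unfolding K1_def C2_def by linarith
  next
    case False
    define r where "r = 2 * \<bar>t\<bar> / s"
    have r1: "r \<ge> 1" using False t s0 by (auto simp: r_def field_simps)
    have rga: "r powr nu \<le> r powr ga"
      using r1 ga nu by (auto intro!: powr_mono)
    have rga1: "r \<le> r powr ga" using r1 ga powr_mono[of 1 ga r] by simp
    have rge0: "r powr 0 \<le> r powr ga" using r1 ga by (intro powr_mono) auto
    have rbe: "1 \<le> r powr be" using r1 be ge_one_powr_ge_zero by auto
    have sn0: "s powr nu \<ge> 0" by simp
    have PF: "\<bar>F (s + t)\<bar> \<le> r powr be + s powr nu * r powr ga"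
    proof (cases "nu \<ge> 0")
      case True
      have "\<bar>s + t\<bar> \<le> \<bar>t\<bar>" using False t s0 by auto
      hence "\<bar>s + t\<bar> powr nu \<le> \<bar>t\<bar> powr nu" using True by (intro powr_mono2) auto
      also have "\<bar>t\<bar> = (s / 2) * r" using s0 by (simp add: r_def)
      also have "((s / 2) * r) powr nu = (s / 2) powr nu * r powr nu" using s0 r1 by (intro powr_mult)
      also have "(s / 2) powr nu \<le> s powr nu" using True s0 by (intro powr_mono2) auto
      hence "(s / 2) powr nu * r powr nu \<le> s powr nu * r powr ga"
        using rga by (intro mult_mono) auto
      finally have "\<bar>s + t\<bar> powr nu \<le> s powr nu * r powr ga" by simp
      thus ?thesis using F2[of "s + t"] True rbe by simp
    next
      case False
      have z: "0 \<le> s powr nu * r powr ga" by simp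
      have a: "\<bar>F (s + t)\<bar> \<le> 1" using F2[of "s + t"] False by simp
      show ?thesis using z a rbe by linarith
    qed
    have P2: "s powr nu \<le> s powr nu * r powr ga"
      using rge0 r1 mult_left_mono[of 1 "r powr ga" "s powr nu"] by simp
    have "\<bar>nu * s powr (nu - 1) * t\<bar> = \<bar>nu\<bar> * s powr nu * (r / 2)"
      using s0 by (simp add: r_def powr_diff abs_mult field_simps)
    also have "\<dots> \<le> \<bar>nu\<bar> * s powr nu * r powr ga"
      using rga1 r1 by (intro mult_left_mono) auto
    finally have P3: "\<bar>nu * s powr (nu - 1) * t\<bar> \<le> \<bar>nu\<bar> * s powr nu * r powr ga" .
    have "\<bar>F (s + t) - s powr nu - nu * s powr (nu - 1) * t\<bar> \<le> \<bar>F (s + t)\<bar> + s powr nu + \<bar>nu * s powr (nu - 1) * t\<bar>"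
      using sn0 by arith
    also have "\<dots> \<le> r powr be + (2 + \<bar>nu\<bar>) * (s powr nu * r powr ga)"
      using PF P2 P3 by (simp add: algebra_simps)
    also have "r powr be = 2 powr be * s powr (- be) * \<bar>t\<bar> powr be"
      unfolding r_def using rpow_split[OF s0] .
    also have "s powr nu * r powr ga = 2 powr ga * s powr (nu - ga) * \<bar>t\<bar> powr ga"
      unfolding r_def rpow_split[OF s0] spl by (simp add: mult_ac)
    also have "(2 + \<bar>nu\<bar>) * (2 powr ga * s powr (nu - ga) * \<bar>t\<bar> powr ga) \<le> K1 * s powr (nu - ga) * \<bar>t\<bar> powr ga"
      using C20 by (simp add: K1_def algebra_simps)
    finally show ?thesis unfolding K1_def C2_def by linarith
  qed
qed

lemma pospart_meas[measurable]: "pospart \<in> borel_measurable borel"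
  unfolding pospart_max[abs_def] by measurable
lemma negpart_meas[measurable]: "negpart \<in> borel_measurable borel"
  unfolding negpart_max[abs_def] by measurable

lemma kappa_Lc:
  assumes al: "1 < al" "al < 2" and nu: "nu < al"
  shows "kappa0 al nu = (nu - 1) * Lc al nu"
proof -
  have ni: "1 - al \<notin> \<int>\<^sub>\<le>\<^sub>0"
  proof
    assume "1 - al \<in> \<int>\<^sub>\<le>\<^sub>0"
    then obtain n :: int where n: "1 - al = of_int n" by (auto elim: nonpos_Ints_cases)
    hence "-1 < n" "n < 0" using al by linarith+
    thus False by simp
  qed
  have g2: "Gamma (2 - al) = (1 - al) * Gamma (1 - al)"
    using Gamma_plus1[OF ni] by (simp add: algebra_simps)
  have gp: "Gamma (2 - nu) > 0" using al nu by (intro Gamma_real_pos) auto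
  have a1: "al - 1 \<noteq> 0" using al by simp
  have g0: "Gamma (2 - nu) \<noteq> 0" using gp by simp
  show ?thesis using a1 g0 unfolding kappa0_def Lc_def g2 by (simp add: field_simps)
qed

lemma Gf_half_bound:
  assumes v: "v \<ge> 0" shows "v \<le> Gf (1/2) v + 8"
proof -
  have sq: "(1 + v) powr (1/2) = sqrt (1 + v)" using v by (simp add: powr_half_sqrt)
  have "sqrt (1 + v) \<le> sqrt (((12 + v) / 4)^2)"
    using v by (intro real_sqrt_le_mono) (simp add: power2_eq_square field_simps)
  also have "\<dots> = (12 + v) / 4" using v by simp
  finally have "sqrt (1 + v) \<le> (12 + v) / 4" .
  thus ?thesis by (simp add: Gf_def sq field_simps)
qed

lemma decomp:
  fixes F :: "real \<Rightarrow> real"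
  assumes F1: "\<And>y. y \<ge> 1 \<Longrightarrow> F y = y powr nu" and s: "s \<ge> 1"
  shows "F (s + t) - F s = nu * s powr (nu - 1) * t + nu * (nu - 1) * s powr nu * Gf nu (pospart t / s)
           + (if t < 0 then F (s + t) - s powr nu - nu * s powr (nu - 1) * t else 0)"
proof (cases "t < 0")
  case True
  thus ?thesis using F1[OF s] by (simp add: pospart_def Gf_def)
next
  case False
  hence t: "t \<ge> 0" by simp
  have s0: "s > 0" using s by simp
  have Fs: "F s = s powr nu" using F1[OF s] .
  have Fst: "F (s + t) = s powr nu * (1 + t / s) powr nu"
  proof -
    have "s + t = s * (1 + t / s)" using s0 by (simp add: field_simps)
    hence "F (s + t) = (s * (1 + t / s)) powr nu" using F1[of "s + t"] s t by simp
    also have "\<dots> = s powr nu * (1 + t / s) powr nu" using s0 t by (intro powr_mult)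
    finally show ?thesis .
  qed
  have lin: "nu * s powr (nu - 1) * t = s powr nu * (nu * (t / s))"
    using s0 by (simp add: powr_diff field_simps)
  show ?thesis
  proof (cases "nu = 0 \<or> nu = 1")
    case True
    have p: "1 + t / s > 0" using t s0 by (simp add: add_pos_nonneg)
    show ?thesis
    proof (cases "nu = 0")
      case True thus ?thesis using Fs Fst p by (simp add: pospart_def Gf_def)
    next
      case False
      hence "nu = 1" using \<open>nu = 0 \<or> nu = 1\<close> by simp
      thus ?thesis using Fs F1[of "s + t"] s t by (simp add: pospart_def Gf_def)
    qed
  next
    case False
    hence "nu * (nu - 1) * Gf nu (t / s) = (1 + t / s) powr nu - 1 - nu * (t / s)"
      by (simp add: Gf_def)
    hence E: "nu * (nu - 1) * s powr nu * Gf nu (t / s) = s powr nu * ((1 + t / s) powr nu - 1 - nu * (t / s))"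
      by (metis mult.assoc mult.commute)
    have "F (s + t) - F s = nu * s powr (nu - 1) * t + nu * (nu - 1) * s powr nu * Gf nu (t / s)"
      unfolding E Fs Fst lin by (simp add: algebra_simps)
    thus ?thesis using t by (simp add: pospart_def)
  qed
qed

lemma core_single:
  fixes M :: "real measure" and T F :: "real \<Rightarrow> real"
  assumes al: "1 < al" "al < 2" and be: "al < be" and c: "c \<ge> 0" and nu: "al - be < nu" "nu < al"
    and F1: "\<And>y. y \<ge> 1 \<Longrightarrow> F y = y powr nu"
    and F2: "\<And>y. \<bar>F y\<bar> \<le> 1 + (if nu \<ge> 0 then \<bar>y\<bar> powr nu else 0)"
    and F3[measurable]: "F \<in> borel_measurable borel"
    and P: "prob_space M" and sM: "sets M = sets borel" and T[measurable]: "T \<in> borel_measurable borel"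
    and H1: "\<And>y. y > 0 \<Longrightarrow> y powr al * measure M {z. y < T z} \<le> Mb"
    and H2: "\<And>y. y \<ge> Y \<Longrightarrow> \<bar>y powr al * measure M {z. y < T z} - c\<bar> \<le> eps"
    and mom: "(\<integral>\<^sup>+z. ennreal (negpart (T z) powr be) \<partial>M) \<le> ennreal B" and B0: "B \<ge> 0"
    and s: "s \<ge> 2" and dl: "dl > 0" "s * dl \<ge> Y"
  shows "integrable M T \<and> integrable M (\<lambda>z. F (s + T z)) \<and>
    \<bar>(\<integral>z. F (s + T z) - F s \<partial>M) - nu * s powr (nu - 1) * (\<integral>z. T z \<partial>M)
       - c * nu * s powr (nu - al) * kappa0 al nu\<bar>
     \<le> s powr (nu - al) * \<bar>nu * (nu - 1)\<bar> * (eps * Lc al nu + (Mb + c) * (dl powr (2 - al) / (2 - al)))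
       + (\<bar>nu * (nu - 1)\<bar> * 2 powr (2 - nu) + (2 + \<bar>nu\<bar>) * 2 powr (min be 2)) * s powr (nu - min be 2) * (1 + B)
       + 2 powr be * s powr (- be) * B"
proof -
  interpret prob_space M by (rule P)
  have mconv: "f \<in> borel_measurable M" if "f \<in> borel_measurable borel" for f :: "real \<Rightarrow> real"
    using that by (simp add: measurable_cong_sets[OF sM refl])
  define ga where "ga = min be 2"
  define K1 where "K1 = \<bar>nu * (nu - 1)\<bar> * 2 powr (2 - nu) + (2 + \<bar>nu\<bar>) * 2 powr ga"
  have ga: "1 \<le> ga" "ga \<le> 2" "ga \<le> be" "nu \<le> ga" using al be nu by (auto simp: ga_def)
  have s0: "s > 0" using s by simp
  have eps0: "eps \<ge> 0" using H2[of "max Y 1"] by linarith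
  have Mb0: "Mb \<ge> 0"
  proof -
    have a: "0 \<le> measure M {z. 1 < T z}" by simp
    have b: "measure M {z. 1 < T z} \<le> Mb" using H1[of 1] by simp
    from a b show ?thesis by linarith
  qed
  define n where "n z = negpart (T z)" for z
  define p where "p z = pospart (T z)" for z
  have n0: "n z \<ge> 0" for z by (simp add: n_def negpart_def)
  have p0: "p z \<ge> 0" for z by (simp add: p_def pospart_def)
  have Tpn: "T z = p z - n z" for z by (simp add: p_def n_def pospart_def negpart_def)
  have nm[measurable]: "n \<in> borel_measurable borel" unfolding n_def by measurable
  have pm[measurable]: "p \<in> borel_measurable borel" unfolding p_def by measurable
  have nbint: "integrable M (\<lambda>z. n z powr be)"
  proof (rule integrableI_bounded)
    show "(\<lambda>z. n z powr be) \<in> borel_measurable M" by (rule mconv) measurable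
    have "(\<integral>\<^sup>+z. ennreal (norm (n z powr be)) \<partial>M) = (\<integral>\<^sup>+z. ennreal (negpart (T z) powr be) \<partial>M)"
      by (simp add: n_def)
    also have "\<dots> \<le> ennreal B" by (rule mom)
    finally show "(\<integral>\<^sup>+z. ennreal (norm (n z powr be)) \<partial>M) < \<infinity>"
      using order.strict_trans1 by fastforce
  qed
  have nbI: "(\<integral>z. n z powr be \<partial>M) \<le> B"
  proof -
    have "ennreal (\<integral>z. n z powr be \<partial>M) = (\<integral>\<^sup>+z. ennreal (n z powr be) \<partial>M)"
      by (rule nn_integral_eq_integral[OF nbint, symmetric]) simp
    also have "\<dots> \<le> ennreal B" using mom by (simp add: n_def)
    finally show ?thesis using B0 by simp
  qed
  have ngle: "n z powr ga \<le> 1 + n z powr be" for z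
  proof (cases "n z \<le> 1")
    case True
    hence "n z powr ga \<le> 1 powr ga" using n0[of z] ga by (intro powr_mono2) auto
    hence "n z powr ga \<le> 1" by simp
    moreover have "0 \<le> n z powr be" by simp
    ultimately show ?thesis by linarith
  next
    case False
    hence "n z powr ga \<le> n z powr be" using ga by (intro powr_mono) auto
    thus ?thesis by simp
  qed
  have n1le: "n z \<le> 1 + n z powr be" for z
  proof -
    have z: "0 \<le> n z powr be" by simp
    show ?thesis
    proof (cases "n z \<le> 1")
      case True thus ?thesis using z by linarith
    next
      case False
      hence "n z powr 1 \<le> n z powr be" using al be by (intro powr_mono) auto
      moreover have "n z powr 1 = n z" using False by simp
      ultimately show ?thesis using z by linarith
    qed
  qed
  have c1: "integrable M (\<lambda>z. 1::real)" by simp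
  have c1n: "integrable M (\<lambda>z. 1 + n z powr be)" using c1 nbint by simp
  have ngint: "integrable M (\<lambda>z. n z powr ga)"
  proof (rule Bochner_Integration.integrable_bound[OF c1n])
    show "(\<lambda>z. n z powr ga) \<in> borel_measurable M" by (rule mconv) measurable
    show "AE z in M. norm (n z powr ga) \<le> norm (1 + n z powr be)"
    proof (intro AE_I2)
      fix z
      have "0 \<le> n z powr be" by simp
      thus "norm (n z powr ga) \<le> norm (1 + n z powr be)" using ngle[of z] by simp
    qed
  qed
  have ngI: "(\<integral>z. n z powr ga \<partial>M) \<le> 1 + B"
  proof -
    have "(\<integral>z. n z powr ga \<partial>M) \<le> (\<integral>z. 1 + n z powr be \<partial>M)"
      by (rule integral_mono[OF ngint c1n]) (simp add: ngle)
    also have "\<dots> = 1 + (\<integral>z. n z powr be \<partial>M)" using nbint by (simp add: prob_space)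
    finally show ?thesis using nbI by simp
  qed
  have nint: "integrable M n"
  proof (rule Bochner_Integration.integrable_bound[OF c1n])
    show "n \<in> borel_measurable M" by (rule mconv) measurable
    show "AE z in M. norm (n z) \<le> norm (1 + n z powr be)"
    proof (intro AE_I2)
      fix z
      have "0 \<le> n z powr be" by simp
      thus "norm (n z) \<le> norm (1 + n z powr be)" using n1le[of z] n0[of z] by simp
    qed
  qed
  have pint: "integrable M p"
  proof -
    have ps: "integrable M (\<lambda>z. Gf (1/2) (pospart (T z) / s))"
      using pos_single[of "1/2" al c M T Mb Y eps s dl] al c P sM T H1 H2 s0 dl by auto
    show ?thesis
    proof (rule Bochner_Integration.integrable_bound[OF integrable_mult_right[OF Bochner_Integration.integrable_add[OF ps integrable_const[of 8]], of s]])
      show "p \<in> borel_measurable M" by (rule mconv) measurable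
      show "AE z in M. norm (p z) \<le> norm (s * (Gf (1/2) (pospart (T z) / s) + 8))"
      proof (intro AE_I2)
        fix z
        have "p z / s \<le> Gf (1/2) (p z / s) + 8" using p0[of z] s0 by (intro Gf_half_bound) simp
        hence "p z \<le> s * (Gf (1/2) (p z / s) + 8)" using s0 by (simp add: field_simps)
        moreover have "0 \<le> Gf (1/2) (p z / s)" using p0[of z] s0 by (intro Gf_nonneg) auto
        ultimately show "norm (p z) \<le> norm (s * (Gf (1/2) (pospart (T z) / s) + 8))"
          using p0[of z] s0 by (simp add: p_def)
      qed
    qed
  qed
  have Teq: "T = (\<lambda>z. p z - n z)" by (rule ext) (simp add: Tpn)
  have Tint: "integrable M T" unfolding Teq using pint nint by (rule Bochner_Integration.integrable_diff)
  define Pz where "Pz z = nu * (nu - 1) * s powr nu * Gf nu (p z / s)" for z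
  have Pint_bd: "integrable M Pz \<and> \<bar>(\<integral>z. Pz z \<partial>M) - c * nu * s powr (nu - al) * kappa0 al nu\<bar>
     \<le> s powr (nu - al) * \<bar>nu * (nu - 1)\<bar> * (eps * Lc al nu + (Mb + c) * (dl powr (2 - al) / (2 - al)))"
  proof (cases "nu = 0 \<or> nu = 1")
    case True
    hence Pz0: "Pz = (\<lambda>z. 0)" by (auto simp: Pz_def)
    have k0: "nu * kappa0 al nu = 0" using True by (auto simp: kappa0_def)
    have nn: "0 \<le> s powr (nu - al) * \<bar>nu * (nu - 1)\<bar> * (eps * Lc al nu + (Mb + c) * (dl powr (2 - al) / (2 - al)))"
      using eps0 Mb0 c Lc_nonneg[OF al nu(2)] al by (intro mult_nonneg_nonneg add_nonneg_nonneg) auto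
    have z: "c * nu * s powr (nu - al) * kappa0 al nu = 0"
      using k0 by (metis mult.commute mult.left_commute mult_zero_right)
    show ?thesis unfolding Pz0 z using nn by simp
  next
    case False
    have PS: "integrable M (\<lambda>z. Gf nu (pospart (T z) / s)) \<and>
         \<bar>s powr al * (\<integral>z. Gf nu (pospart (T z) / s) \<partial>M) - c * Lc al nu\<bar>
           \<le> eps * Lc al nu + (Mb + c) * (dl powr (2 - al) / (2 - al))"
      using pos_single[of nu al c M T Mb Y eps s dl] False nu al c P sM T H1 H2 s0 dl by auto
    have Pint: "integrable M Pz" unfolding Pz_def p_def using PS by simp
    have IP: "(\<integral>z. Pz z \<partial>M) = nu * (nu - 1) * s powr nu * (\<integral>z. Gf nu (pospart (T z) / s) \<partial>M)"
      unfolding Pz_def p_def by simp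
    have sn: "s powr nu = s powr (nu - al) * s powr al" by (simp add: powr_diff)
    have "(\<integral>z. Pz z \<partial>M) - c * nu * s powr (nu - al) * kappa0 al nu
        = s powr (nu - al) * (nu * (nu - 1)) * (s powr al * (\<integral>z. Gf nu (pospart (T z) / s) \<partial>M) - c * Lc al nu)"
      unfolding IP sn kappa_Lc[OF al nu(2)] by (simp add: algebra_simps)
    hence "\<bar>(\<integral>z. Pz z \<partial>M) - c * nu * s powr (nu - al) * kappa0 al nu\<bar>
        = s powr (nu - al) * \<bar>nu * (nu - 1)\<bar> * \<bar>s powr al * (\<integral>z. Gf nu (pospart (T z) / s) \<partial>M) - c * Lc al nu\<bar>"
      by (simp add: abs_mult)
    also have "\<dots> \<le> s powr (nu - al) * \<bar>nu * (nu - 1)\<bar> * (eps * Lc al nu + (Mb + c) * (dl powr (2 - al) / (2 - al)))"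
      using PS by (intro mult_left_mono) auto
    finally show ?thesis using Pint by simp
  qed
  define hn where "hn z = (if T z < 0 then F (s + T z) - s powr nu - nu * s powr (nu - 1) * T z else 0)" for z
  define Bn where "Bn z = K1 * s powr (nu - ga) * n z powr ga + 2 powr be * s powr (- be) * n z powr be" for z
  have hnm: "hn \<in> borel_measurable M" unfolding hn_def by (rule mconv) measurable
  have Bnint: "integrable M Bn" unfolding Bn_def using ngint nbint by auto
  have hnbd: "\<bar>hn z\<bar> \<le> Bn z" for z
  proof (cases "T z < 0")
    case True
    have "n z = \<bar>T z\<bar>" using True by (simp add: n_def negpart_def)
    thus ?thesis using hneg_bound[OF F1 F2 s True _ ga(4) ga(1) ga(2), of be] True al nu be
      unfolding hn_def Bn_def K1_def by simp
  next
    case False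
    have "0 \<le> K1" by (simp add: K1_def)
    thus ?thesis using False unfolding hn_def Bn_def by simp
  qed
  have hnint: "integrable M hn"
    by (rule Bochner_Integration.integrable_bound[OF Bnint hnm]) (auto intro!: AE_I2 order.trans[OF hnbd])
  have hnI: "\<bar>\<integral>z. hn z \<partial>M\<bar> \<le> K1 * s powr (nu - ga) * (1 + B) + 2 powr be * s powr (- be) * B"
  proof -
    have "\<bar>\<integral>z. hn z \<partial>M\<bar> \<le> (\<integral>z. Bn z \<partial>M)"
      by (rule integral_abs_bound_integral[OF hnint Bnint hnbd])
    also have "\<dots> = K1 * s powr (nu - ga) * (\<integral>z. n z powr ga \<partial>M) + 2 powr be * s powr (- be) * (\<integral>z. n z powr be \<partial>M)"
      unfolding Bn_def using ngint nbint by simp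
    also have "\<dots> \<le> K1 * s powr (nu - ga) * (1 + B) + 2 powr be * s powr (- be) * B"
      using ngI nbI by (intro add_mono mult_left_mono) (auto simp: K1_def)
    finally show ?thesis .
  qed
  have dec: "F (s + T z) - F s = nu * s powr (nu - 1) * T z + Pz z + hn z" for z
    using decomp[OF F1, of s "T z"] s by (simp add: Pz_def hn_def p_def)
  have Pint: "integrable M Pz" using Pint_bd by simp
  have lint: "integrable M (\<lambda>z. nu * s powr (nu - 1) * T z)" using Tint by simp
  have Dint: "integrable M (\<lambda>z. F (s + T z) - F s)"
    unfolding dec using lint Pint hnint by auto
  have Fint: "integrable M (\<lambda>z. F (s + T z))"
  proof -
    have cF: "integrable M (\<lambda>z. F s)" by simp
    have "integrable M (\<lambda>z. (F (s + T z) - F s) + F s)" by (rule Bochner_Integration.integrable_add[OF Dint cF])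
    thus ?thesis by simp
  qed
  have DI: "(\<integral>z. F (s + T z) - F s \<partial>M) = nu * s powr (nu - 1) * (\<integral>z. T z \<partial>M) + (\<integral>z. Pz z \<partial>M) + (\<integral>z. hn z \<partial>M)"
    unfolding dec using lint Pint hnint Tint by simp
  have "\<bar>(\<integral>z. F (s + T z) - F s \<partial>M) - nu * s powr (nu - 1) * (\<integral>z. T z \<partial>M) - c * nu * s powr (nu - al) * kappa0 al nu\<bar>
      = \<bar>((\<integral>z. Pz z \<partial>M) - c * nu * s powr (nu - al) * kappa0 al nu) + (\<integral>z. hn z \<partial>M)\<bar>"
    unfolding DI by (simp add: algebra_simps)
  also have "\<dots> \<le> \<bar>(\<integral>z. Pz z \<partial>M) - c * nu * s powr (nu - al) * kappa0 al nu\<bar> + \<bar>\<integral>z. hn z \<partial>M\<bar>"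
    by (rule abs_triangle_ineq)
  also have "\<dots> \<le> s powr (nu - al) * \<bar>nu * (nu - 1)\<bar> * (eps * Lc al nu + (Mb + c) * (dl powr (2 - al) / (2 - al)))
       + (K1 * s powr (nu - ga) * (1 + B) + 2 powr be * s powr (- be) * B)"
    using Pint_bd hnI by (intro add_mono) auto
  finally show ?thesis using Tint Fint unfolding K1_def ga_def by (simp add: algebra_simps)
qed

lemma eventually_small_powr:
  fixes e C :: real assumes "e < 0" "C > 0"
  shows "\<exists>S. \<forall>s\<ge>S. s powr e \<le> C"
proof -
  have "((\<lambda>s::real. s powr e) \<longlongrightarrow> 0) at_top"
    using assms by (intro tendsto_neg_powr filterlim_ident) auto
  hence "eventually (\<lambda>s::real. s powr e < C) at_top" using assms by (intro order_tendstoD) auto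
  thus ?thesis unfolding eventually_at_top_linorder by (meson less_imp_le)
qed

lemma frac_le1: "0 \<le> (x::real) \<Longrightarrow> x / (x + 1) \<le> 1"
  by (simp add: divide_le_eq)

lemma uniform_core:
  fixes I :: "'i set" and M :: "'i \<Rightarrow> real measure" and T :: "'i \<Rightarrow> real \<Rightarrow> real"
    and s :: "'i \<Rightarrow> real" and F :: "real \<Rightarrow> real"
  assumes al: "1 < al" "al < 2" and be: "al < be" and c: "c > 0" and nu: "al - be < nu" "nu < al"
    and F1: "\<And>y. y \<ge> 1 \<Longrightarrow> F y = y powr nu"
    and F2: "\<And>y. \<bar>F y\<bar> \<le> 1 + (if nu \<ge> 0 then \<bar>y\<bar> powr nu else 0)"
    and F3: "F \<in> borel_measurable borel"
    and P: "\<And>i. i \<in> I \<Longrightarrow> prob_space (M i)" and sM: "\<And>i. i \<in> I \<Longrightarrow> sets (M i) = sets borel"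
    and T: "\<And>i. i \<in> I \<Longrightarrow> T i \<in> borel_measurable borel"
    and tail: "\<And>e. e > 0 \<Longrightarrow> \<exists>Y. \<forall>y\<ge>Y. \<forall>i\<in>I. \<bar>y powr al * measure (M i) {z. y < T i z} - c\<bar> \<le> e"
    and mom: "\<And>i. i \<in> I \<Longrightarrow> (\<integral>\<^sup>+z. ennreal (negpart (T i z) powr be) \<partial>M i) \<le> ennreal B"
    and B0: "B \<ge> 0"
    and eps: "eps > 0"
  shows "\<exists>S. \<forall>i\<in>I. s i \<ge> S \<longrightarrow> integrable (M i) (T i) \<and> integrable (M i) (\<lambda>z. F (s i + T i z)) \<and>
    \<bar>(\<integral>z. F (s i + T i z) - F (s i) \<partial>M i) - nu * s i powr (nu - 1) * (\<integral>z. T i z \<partial>M i)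
       - c * nu * s i powr (nu - al) * kappa0 al nu\<bar> \<le> eps * s i powr (nu - al)"
proof -
  obtain Y1 where Y1: "\<And>y i. y \<ge> Y1 \<Longrightarrow> i \<in> I \<Longrightarrow> \<bar>y powr al * measure (M i) {z. y < T i z} - c\<bar> \<le> 1"
    using tail[of 1] by auto
  define Mb where "Mb = c + 1 + (max Y1 1) powr al"
  have Mb0: "Mb \<ge> 0" using c by (simp add: Mb_def)
  have H1: "y powr al * measure (M i) {z. y < T i z} \<le> Mb" if "y > 0" "i \<in> I" for y i
  proof (cases "y \<ge> Y1")
    case True
    have a: "0 \<le> (max Y1 1) powr al" by simp
    show ?thesis using Y1[OF True that(2)] a unfolding Mb_def by linarith
  next
    case False
    interpret prob_space "M i" using P[OF that(2)] .
    have "measure (M i) {z. y < T i z} \<le> 1" by simp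
    hence "y powr al * measure (M i) {z. y < T i z} \<le> y powr al * 1" by (intro mult_left_mono) auto
    also have "y powr al \<le> (max Y1 1) powr al" using False that al by (intro powr_mono2) auto
    finally show ?thesis using c by (simp add: Mb_def)
  qed
  define A where "A = \<bar>nu * (nu - 1)\<bar>"
  define ga where "ga = min be 2"
  define K1 where "K1 = \<bar>nu * (nu - 1)\<bar> * 2 powr (2 - nu) + (2 + \<bar>nu\<bar>) * 2 powr (min be 2)"
  have A0: "A \<ge> 0" by (simp add: A_def)
  have K10: "K1 \<ge> 0" by (simp add: K1_def)
  have Lc0: "Lc al nu \<ge> 0" using Lc_nonneg[OF al nu(2)] .
  define e1 where "e1 = eps / (4 * (A * Lc al nu + 1))"
  have e1: "e1 > 0" using eps A0 Lc0 by (simp add: e1_def add_nonneg_pos)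
  have e1b: "A * (e1 * Lc al nu) \<le> eps / 4"
  proof -
    have "A * (e1 * Lc al nu) = (eps / 4) * (A * Lc al nu / (A * Lc al nu + 1))"
      using A0 Lc0 by (simp add: e1_def field_simps)
    also have "\<dots> \<le> (eps / 4) * 1" using eps A0 Lc0 by (intro mult_left_mono frac_le1) auto
    finally show ?thesis by simp
  qed
  obtain Y where Y: "\<And>y i. y \<ge> Y \<Longrightarrow> i \<in> I \<Longrightarrow> \<bar>y powr al * measure (M i) {z. y < T i z} - c\<bar> \<le> e1"
    using tail[OF e1] by auto
  define q where "q = eps * (2 - al) / (4 * (A * (Mb + c) + 1))"
  have q: "q > 0" using eps al A0 Mb0 c by (simp add: q_def add_nonneg_pos)
  define dl where "dl = q powr (1 / (2 - al))"
  have dl: "dl > 0" using q by (simp add: dl_def)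
  have dlq: "dl powr (2 - al) = q" using q al by (simp add: dl_def powr_powr)
  have dlb: "A * ((Mb + c) * (dl powr (2 - al) / (2 - al))) \<le> eps / 4"
  proof -
    have "A * ((Mb + c) * (dl powr (2 - al) / (2 - al))) = (eps / 4) * (A * (Mb + c) / (A * (Mb + c) + 1))"
    proof -
      define D where "D = A * (Mb + c) + 1"
      define h where "h = 2 - al"
      have d1: "h \<noteq> 0" using al by (simp add: h_def)
      have "0 \<le> A * (Mb + c)" using A0 Mb0 c by simp
      hence d2: "D \<noteq> 0" unfolding D_def by linarith
      have e: "A * (Mb + c) = D - 1" by (simp add: D_def)
      have "dl powr (2 - al) / (2 - al) = q / h" by (simp add: dlq h_def)
      also have "q = eps * h / (4 * D)" by (simp add: q_def D_def h_def)
      also have "eps * h / (4 * D) / h = eps / (4 * D)" using d1 d2 by (simp add: field_simps)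
      finally have "dl powr (2 - al) / (2 - al) = eps / (4 * D)" .
      hence "A * ((Mb + c) * (dl powr (2 - al) / (2 - al))) = (A * (Mb + c)) * (eps / (4 * D))" by simp
      also have "\<dots> = (eps / 4) * (A * (Mb + c) / (A * (Mb + c) + 1))"
        unfolding D_def[symmetric] using d2 by (simp add: field_simps)
      finally show ?thesis .
    qed
    also have "\<dots> \<le> (eps / 4) * 1" using eps A0 Mb0 c by (intro mult_left_mono frac_le1) auto
    finally show ?thesis by simp
  qed
  obtain S1 where S1: "\<And>t. t \<ge> S1 \<Longrightarrow> t powr (al - ga) \<le> eps / (4 * (K1 * (1 + B) + 1))"
    using eventually_small_powr[of "al - ga" "eps / (4 * (K1 * (1 + B) + 1))"] al be eps K10 B0
    by (auto simp: ga_def add_nonneg_pos)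
  obtain S2 where S2: "\<And>t. t \<ge> S2 \<Longrightarrow> t powr (al - be - nu) \<le> eps / (4 * (2 powr be * B + 1))"
    using eventually_small_powr[of "al - be - nu" "eps / (4 * (2 powr be * B + 1))"] nu eps B0
    by (auto simp: add_nonneg_pos)
  define S where "S = max (max 2 (Y / dl)) (max S1 S2)"
  show ?thesis
  proof (intro exI[of _ S] ballI impI)
    fix i assume i: "i \<in> I" and si: "s i \<ge> S"
    define t where "t = s i"
    have t2: "t \<ge> 2" and tS1: "t \<ge> S1" and tS2: "t \<ge> S2" and tY: "t \<ge> Y / dl"
      using si by (auto simp: S_def t_def)
    have t0: "t > 0" using t2 by simp
    have tdl: "t * dl \<ge> Y" using tY dl by (simp add: field_simps)
    have CS: "integrable (M i) (T i) \<and> integrable (M i) (\<lambda>z. F (t + T i z)) \<and>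
      \<bar>(\<integral>z. F (t + T i z) - F t \<partial>M i) - nu * t powr (nu - 1) * (\<integral>z. T i z \<partial>M i)
         - c * nu * t powr (nu - al) * kappa0 al nu\<bar>
       \<le> t powr (nu - al) * A * (e1 * Lc al nu + (Mb + c) * (dl powr (2 - al) / (2 - al)))
         + K1 * t powr (nu - ga) * (1 + B) + 2 powr be * t powr (- be) * B"
      using core_single[OF al be _ nu F1 F2 F3 P[OF i] sM[OF i] T[OF i] H1[OF _ i] Y[OF _ i] mom[OF i] B0 t2 dl tdl] c
      unfolding A_def K1_def ga_def by simp
    have tn: "t powr (nu - al) > 0" using t0 by simp
    have b1: "t powr (nu - al) * A * (e1 * Lc al nu + (Mb + c) * (dl powr (2 - al) / (2 - al)))
         \<le> t powr (nu - al) * (eps / 2)"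
    proof -
      have "A * (e1 * Lc al nu + (Mb + c) * (dl powr (2 - al) / (2 - al))) \<le> eps / 2"
        unfolding distrib_left using e1b dlb by linarith
      thus ?thesis using tn by (simp add: mult.assoc mult_left_mono)
    qed
    have b2: "K1 * t powr (nu - ga) * (1 + B) \<le> t powr (nu - al) * (eps / 4)"
    proof -
      have "t powr (nu - ga) = t powr (nu - al) * t powr (al - ga)" by (simp add: powr_add[symmetric])
      hence "K1 * t powr (nu - ga) * (1 + B) = t powr (nu - al) * (K1 * (1 + B) * t powr (al - ga))"
        by (simp add: mult_ac)
      also have "K1 * (1 + B) * t powr (al - ga) \<le> K1 * (1 + B) * (eps / (4 * (K1 * (1 + B) + 1)))"
        using S1[OF tS1] K10 B0 by (intro mult_left_mono) auto
      also have "\<dots> \<le> eps / 4"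
      proof -
        have "K1 * (1 + B) * (eps / (4 * (K1 * (1 + B) + 1))) = (eps / 4) * (K1 * (1 + B) / (K1 * (1 + B) + 1))"
          using K10 B0 by (simp add: field_simps)
        also have "\<dots> \<le> (eps / 4) * 1" using eps K10 B0 by (intro mult_left_mono frac_le1) auto
        finally show ?thesis by simp
      qed
      finally show ?thesis using tn by (simp add: mult_left_mono)
    qed
    have b3: "2 powr be * t powr (- be) * B \<le> t powr (nu - al) * (eps / 4)"
    proof -
      have "t powr (- be) = t powr (nu - al) * t powr (al - be - nu)" by (simp add: powr_add[symmetric])
      hence "2 powr be * t powr (- be) * B = t powr (nu - al) * (2 powr be * B * t powr (al - be - nu))"
        by (simp add: mult_ac)
      also have "2 powr be * B * t powr (al - be - nu) \<le> 2 powr be * B * (eps / (4 * (2 powr be * B + 1)))"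
        using S2[OF tS2] B0 by (intro mult_left_mono) auto
      also have "\<dots> \<le> eps / 4"
      proof -
        have "2 powr be * B * (eps / (4 * (2 powr be * B + 1))) = (eps / 4) * (2 powr be * B / (2 powr be * B + 1))"
          using B0 by (simp add: field_simps)
        also have "\<dots> \<le> (eps / 4) * 1" using eps B0 by (intro mult_left_mono frac_le1) auto
        finally show ?thesis by simp
      qed
      finally show ?thesis using tn by (simp add: mult_left_mono)
    qed
    have "t powr (nu - al) * (eps / 2) + t powr (nu - al) * (eps / 4) + t powr (nu - al) * (eps / 4) = eps * t powr (nu - al)"
      by (simp add: field_simps)
    thus "integrable (M i) (T i) \<and> integrable (M i) (\<lambda>z. F (s i + T i z)) \<and>
      \<bar>(\<integral>z. F (s i + T i z) - F (s i) \<partial>M i) - nu * s i powr (nu - 1) * (\<integral>z. T i z \<partial>M i)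
         - c * nu * s i powr (nu - al) * kappa0 al nu\<bar> \<le> eps * s i powr (nu - al)"
      using CS b1 b2 b3 unfolding t_def by linarith
  qed
qed

lemma powr_le1_neg: "y \<ge> 1 \<Longrightarrow> (nu::real) < 0 \<Longrightarrow> y powr nu \<le> 1"
  using powr_mono2'[of nu 1 y] by simp

lemma f1_F1: "y \<ge> 1 \<Longrightarrow> f1 nu y = y powr nu" by (simp add: f1_def)
lemma f2_F1: "y \<ge> 1 \<Longrightarrow> f2 nu y = y powr nu" by (simp add: f2_def)
lemma f1_F2: "\<bar>f1 nu y\<bar> \<le> 1 + (if nu \<ge> 0 then \<bar>y\<bar> powr nu else 0)"
proof (cases "y \<ge> 1")
  case True
  show ?thesis
  proof (cases "nu \<ge> 0")
    case True thus ?thesis using \<open>y \<ge> 1\<close> by (simp add: f1_def)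
  next
    case False thus ?thesis using \<open>y \<ge> 1\<close> powr_le1_neg[of y nu] by (simp add: f1_def)
  qed
next
  case False
  have "0 \<le> \<bar>y\<bar> powr nu" by simp
  thus ?thesis using False by (simp add: f1_def)
qed
lemma f2_F2: "\<bar>f2 nu y\<bar> \<le> 1 + (if nu \<ge> 0 then \<bar>y\<bar> powr nu else 0)"
proof (cases "\<bar>y\<bar> \<ge> 1")
  case True
  show ?thesis
  proof (cases "nu \<ge> 0")
    case True thus ?thesis using \<open>\<bar>y\<bar> \<ge> 1\<close> by (simp add: f2_def)
  next
    case False thus ?thesis using \<open>\<bar>y\<bar> \<ge> 1\<close> powr_le1_neg[of "\<bar>y\<bar>" nu] by (simp add: f2_def)
  qed
next
  case False
  have "0 \<le> \<bar>y\<bar> powr nu" by simp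
  thus ?thesis using False by (simp add: f2_def)
qed
lemma f1_F3[measurable]: "f1 nu \<in> borel_measurable borel" unfolding f1_def by measurable
lemma f2_F3[measurable]: "f2 nu \<in> borel_measurable borel" unfolding f2_def by measurable
lemma f2_neg: "f2 nu (- y) = f2 nu y" by (simp add: f2_def)

theorem lemma4p3:
  fixes X :: "real set" and K :: "real \<Rightarrow> real measure"
    and \<alpha> \<beta> c \<nu> :: real
  assumes "markov_kernel_on X K"
    and "T_out X K \<alpha> \<beta> c"
    and "\<alpha> - \<beta> < \<nu>" and "\<nu> < \<alpha>"
  shows "((\<lambda>x. D1 K \<nu> x - \<nu> * x powr (\<nu> - 1) * drift K x
              - c * \<nu> * x powr (\<nu> - \<alpha>) * kappa0 \<alpha> \<nu>)
           \<in> o[at_top \<sqinter> principal X](\<lambda>x. x powr (\<nu> - \<alpha>))) \<and>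
         ((\<lambda>x. D2 K \<nu> x - \<nu> * sgn x * \<bar>x\<bar> powr (\<nu> - 1) * drift K x
              - c * \<nu> * \<bar>x\<bar> powr (\<nu> - \<alpha>) * kappa0 \<alpha> \<nu>)
           \<in> o[at_infinity \<sqinter> principal X](\<lambda>x. \<bar>x\<bar> powr (\<nu> - \<alpha>)))"
proof -
  note mk = assms(1)[unfolded markov_kernel_on_def]
  have P: "\<And>x. x \<in> X \<Longrightarrow> prob_space (K x)" and sK: "\<And>x. x \<in> X \<Longrightarrow> sets (K x) = sets borel"
    using mk by auto
  note TO = assms(2)[unfolded T_out_def]
  have al: "1 < \<alpha>" "\<alpha> < 2" and be: "\<alpha> < \<beta>" and c: "c > 0" using TO by auto
  note nu = assms(3,4)
  obtain x0 where x0: "x0 \<ge> 0"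
    and tp: "\<And>e. e > 0 \<Longrightarrow> \<forall>\<^sub>F y in at_top. \<forall>x\<in>X. x \<ge> x0 \<longrightarrow>
            \<bar>y powr \<alpha> * measure (K x) {z. pospart (z - x) > y} - c\<bar> \<le> e"
    and tn: "\<And>e. e > 0 \<Longrightarrow> \<forall>\<^sub>F y in at_top. \<forall>x\<in>X. x \<le> - x0 \<longrightarrow>
            \<bar>y powr \<alpha> * measure (K x) {z. negpart (z - x) > y} - c\<bar> \<le> e"
    and Bp: "\<exists>B::real. \<forall>x\<in>X. x \<ge> x0 \<longrightarrow> (\<integral>\<^sup>+ z. ennreal (negpart (z - x) powr \<beta>) \<partial>K x) \<le> ennreal B"
    and Bn: "\<exists>B::real. \<forall>x\<in>X. x \<le> - x0 \<longrightarrow> (\<integral>\<^sup>+ z. ennreal (pospart (z - x) powr \<beta>) \<partial>K x) \<le> ennreal B"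
    using TO by blast
  obtain B1 where B1: "\<And>x. x \<in> X \<Longrightarrow> x \<ge> x0 \<Longrightarrow> (\<integral>\<^sup>+ z. ennreal (negpart (z - x) powr \<beta>) \<partial>K x) \<le> ennreal (max B1 0)"
    using Bp by (meson ennreal_le_iff max.cobounded1 order_trans ennreal_leI)
  obtain B2 where B2: "\<And>x. x \<in> X \<Longrightarrow> x \<le> - x0 \<Longrightarrow> (\<integral>\<^sup>+ z. ennreal (pospart (z - x) powr \<beta>) \<partial>K x) \<le> ennreal (max B2 0)"
    using Bn by (meson ennreal_le_iff max.cobounded1 order_trans ennreal_leI)
  have posF: "\<exists>S. \<forall>x\<in>{x\<in>X. x \<ge> x0}. x \<ge> S \<longrightarrow>
      \<bar>(\<integral>z. F z - F x \<partial>K x) - \<nu> * x powr (\<nu> - 1) * drift K x - c * \<nu> * x powr (\<nu> - \<alpha>) * kappa0 \<alpha> \<nu>\<bar>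
        \<le> e * x powr (\<nu> - \<alpha>)"
    if F1: "\<And>y. y \<ge> 1 \<Longrightarrow> F y = y powr \<nu>"
      and F2: "\<And>y. \<bar>F y\<bar> \<le> 1 + (if \<nu> \<ge> 0 then \<bar>y\<bar> powr \<nu> else 0)"
      and F3: "F \<in> borel_measurable borel" and e: "e > 0" for F :: "real \<Rightarrow> real" and e :: real
  proof -
    have tail: "\<exists>Y. \<forall>y\<ge>Y. \<forall>x\<in>{x\<in>X. x \<ge> x0}. \<bar>y powr \<alpha> * measure (K x) {z. y < z - x} - c\<bar> \<le> e'"
      if e': "e' > 0" for e'
    proof -
      obtain Y where Y: "\<And>y. y \<ge> Y \<Longrightarrow> \<forall>x\<in>X. x \<ge> x0 \<longrightarrow>
            \<bar>y powr \<alpha> * measure (K x) {z. pospart (z - x) > y} - c\<bar> \<le> e'"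
        using tp[OF e'] unfolding eventually_at_top_linorder by blast
      show ?thesis
      proof (intro exI[of _ "max Y 1"] allI impI ballI)
        fix y x assume y: "max Y 1 \<le> y" and x: "x \<in> {x\<in>X. x \<ge> x0}"
        have "{z. pospart (z - x) > y} = {z. y < z - x}" using y by (auto simp: pospart_def)
        thus "\<bar>y powr \<alpha> * measure (K x) {z. y < z - x} - c\<bar> \<le> e'" using Y[of y] y x by auto
      qed
    qed
    have P': "\<And>i. i \<in> {x\<in>X. x \<ge> x0} \<Longrightarrow> prob_space (K i)" using P by auto
    have sK': "\<And>i. i \<in> {x\<in>X. x \<ge> x0} \<Longrightarrow> sets (K i) = sets borel" using sK by auto
    have T': "\<And>i. i \<in> {x\<in>X. x \<ge> x0} \<Longrightarrow> (\<lambda>z. z - i) \<in> borel_measurable borel" by simp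
    have B': "\<And>i. i \<in> {x\<in>X. x \<ge> x0} \<Longrightarrow> (\<integral>\<^sup>+z. ennreal (negpart (z - i) powr \<beta>) \<partial>K i) \<le> ennreal (max B1 0)"
      using B1 by auto
    have U: "\<exists>S. \<forall>i\<in>{x\<in>X. x \<ge> x0}. (\<lambda>x. x) i \<ge> S \<longrightarrow> integrable (K i) ((\<lambda>x z. z - x) i) \<and>
          integrable (K i) (\<lambda>z. F ((\<lambda>x. x) i + (\<lambda>x z. z - x) i z)) \<and>
    \<bar>(\<integral>z. F ((\<lambda>x. x) i + (\<lambda>x z. z - x) i z) - F ((\<lambda>x. x) i) \<partial>K i) - \<nu> * (\<lambda>x. x) i powr (\<nu> - 1) * (\<integral>z. (\<lambda>x z. z - x) i z \<partial>K i)
       - c * \<nu> * (\<lambda>x. x) i powr (\<nu> - \<alpha>) * kappa0 \<alpha> \<nu>\<bar> \<le> e * (\<lambda>x. x) i powr (\<nu> - \<alpha>)"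
      by (rule uniform_core[where I="{x\<in>X. x \<ge> x0}" and M=K and T="\<lambda>x z. z - x" and B="max B1 0" and s="\<lambda>x. x" and F=F])
         (use al be c nu F1 F2 F3 P' sK' T' tail B' e in auto)
    show ?thesis using U unfolding drift_def by simp blast
  qed
  have negF: "\<exists>S. \<forall>x\<in>{x\<in>X. x \<le> - x0}. - x \<ge> S \<longrightarrow>
      \<bar>(\<integral>z. f2 \<nu> z - f2 \<nu> x \<partial>K x) + \<nu> * (- x) powr (\<nu> - 1) * drift K x - c * \<nu> * (- x) powr (\<nu> - \<alpha>) * kappa0 \<alpha> \<nu>\<bar>
        \<le> e * (- x) powr (\<nu> - \<alpha>)"
    if e: "e > 0" for e :: real
  proof -
    have tail: "\<exists>Y. \<forall>y\<ge>Y. \<forall>x\<in>{x\<in>X. x \<le> - x0}. \<bar>y powr \<alpha> * measure (K x) {z. y < x - z} - c\<bar> \<le> e'"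
      if e': "e' > 0" for e'
    proof -
      obtain Y where Y: "\<And>y. y \<ge> Y \<Longrightarrow> \<forall>x\<in>X. x \<le> - x0 \<longrightarrow>
            \<bar>y powr \<alpha> * measure (K x) {z. negpart (z - x) > y} - c\<bar> \<le> e'"
        using tn[OF e'] unfolding eventually_at_top_linorder by blast
      show ?thesis
      proof (intro exI[of _ "max Y 1"] allI impI ballI)
        fix y x assume y: "max Y 1 \<le> y" and x: "x \<in> {x\<in>X. x \<le> - x0}"
        have "{z. negpart (z - x) > y} = {z. y < x - z}" using y by (auto simp: negpart_def)
        thus "\<bar>y powr \<alpha> * measure (K x) {z. y < x - z} - c\<bar> \<le> e'" using Y[of y] y x by auto
      qed
    qed
    have mom: "(\<integral>\<^sup>+z. ennreal (negpart (x - z) powr \<beta>) \<partial>K x) \<le> ennreal (max B2 0)"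
      if "x \<in> {x\<in>X. x \<le> - x0}" for x
    proof -
      have "negpart (x - z) = pospart (z - x)" for z by (simp add: negpart_def pospart_def)
      thus ?thesis using B2 that by simp
    qed
    have P': "\<And>i. i \<in> {x\<in>X. x \<le> - x0} \<Longrightarrow> prob_space (K i)" using P by auto
    have sK': "\<And>i. i \<in> {x\<in>X. x \<le> - x0} \<Longrightarrow> sets (K i) = sets borel" using sK by auto
    have T': "\<And>i. i \<in> {x\<in>X. x \<le> - x0} \<Longrightarrow> (\<lambda>z. i - z) \<in> borel_measurable borel" by simp
    have U: "\<exists>S. \<forall>i\<in>{x\<in>X. x \<le> - x0}. (\<lambda>x. - x) i \<ge> S \<longrightarrow> integrable (K i) ((\<lambda>x z. x - z) i) \<and>
          integrable (K i) (\<lambda>z. f2 \<nu> ((\<lambda>x. - x) i + (\<lambda>x z. x - z) i z)) \<and>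
    \<bar>(\<integral>z. f2 \<nu> ((\<lambda>x. - x) i + (\<lambda>x z. x - z) i z) - f2 \<nu> ((\<lambda>x. - x) i) \<partial>K i) - \<nu> * (\<lambda>x. - x) i powr (\<nu> - 1) * (\<integral>z. (\<lambda>x z. x - z) i z \<partial>K i)
       - c * \<nu> * (\<lambda>x. - x) i powr (\<nu> - \<alpha>) * kappa0 \<alpha> \<nu>\<bar> \<le> e * (\<lambda>x. - x) i powr (\<nu> - \<alpha>)"
      by (rule uniform_core[where I="{x\<in>X. x \<le> - x0}" and M=K and T="\<lambda>x z. x - z" and B="max B2 0" and s="\<lambda>x. - x" and F="f2 \<nu>"])
         (use al be c nu f2_F1 f2_F2 f2_F3 P' sK' T' tail mom e in auto)
    obtain S where S: "\<And>x. x \<in> {x\<in>X. x \<le> - x0} \<Longrightarrow> - x \<ge> S \<Longrightarrow>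
      \<bar>(\<integral>z. f2 \<nu> (- x + (x - z)) - f2 \<nu> (- x) \<partial>K x) - \<nu> * (- x) powr (\<nu> - 1) * (\<integral>z. x - z \<partial>K x)
         - c * \<nu> * (- x) powr (\<nu> - \<alpha>) * kappa0 \<alpha> \<nu>\<bar> \<le> e * (- x) powr (\<nu> - \<alpha>)"
      using U by blast
    show ?thesis
    proof (intro exI[of _ S] ballI impI)
      fix x assume x: "x \<in> {x\<in>X. x \<le> - x0}" and xs: "- x \<ge> S"
      have i1: "(\<integral>z. f2 \<nu> (- x + (x - z)) - f2 \<nu> (- x) \<partial>K x) = (\<integral>z. f2 \<nu> z - f2 \<nu> x \<partial>K x)"
        by (simp add: f2_neg)
      have i2: "(\<integral>z. x - z \<partial>K x) = - drift K x"
        unfolding drift_def by (subst integral_minus[symmetric]) simp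
      show "\<bar>(\<integral>z. f2 \<nu> z - f2 \<nu> x \<partial>K x) + \<nu> * (- x) powr (\<nu> - 1) * drift K x - c * \<nu> * (- x) powr (\<nu> - \<alpha>) * kappa0 \<alpha> \<nu>\<bar>
        \<le> e * (- x) powr (\<nu> - \<alpha>)"
        using S[OF x xs] unfolding i1 i2 by simp
    qed
  qed
  show ?thesis
  proof
    show "(\<lambda>x. D1 K \<nu> x - \<nu> * x powr (\<nu> - 1) * drift K x - c * \<nu> * x powr (\<nu> - \<alpha>) * kappa0 \<alpha> \<nu>)
           \<in> o[at_top \<sqinter> principal X](\<lambda>x. x powr (\<nu> - \<alpha>))"
    proof (rule landau_o.smallI)
      fix e :: real assume e: "e > 0"
      obtain S where S: "\<And>x. x \<in> {x\<in>X. x \<ge> x0} \<Longrightarrow> x \<ge> S \<Longrightarrow>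
        \<bar>(\<integral>z. f1 \<nu> z - f1 \<nu> x \<partial>K x) - \<nu> * x powr (\<nu> - 1) * drift K x - c * \<nu> * x powr (\<nu> - \<alpha>) * kappa0 \<alpha> \<nu>\<bar>
          \<le> e * x powr (\<nu> - \<alpha>)"
        using posF[OF f1_F1 f1_F2 f1_F3 e] by blast
      show "\<forall>\<^sub>F x in at_top \<sqinter> principal X. norm (D1 K \<nu> x - \<nu> * x powr (\<nu> - 1) * drift K x - c * \<nu> * x powr (\<nu> - \<alpha>) * kappa0 \<alpha> \<nu>)
             \<le> e * norm (x powr (\<nu> - \<alpha>))"
        unfolding eventually_inf_principal eventually_at_top_linorder
      proof (intro exI[of _ "max S x0"] allI impI)
        fix x assume x: "max S x0 \<le> x" "x \<in> X"
        show "norm (D1 K \<nu> x - \<nu> * x powr (\<nu> - 1) * drift K x - c * \<nu> * x powr (\<nu> - \<alpha>) * kappa0 \<alpha> \<nu>)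
             \<le> e * norm (x powr (\<nu> - \<alpha>))"
          using S[of x] x by (simp add: D1_def)
      qed
    qed
  next
    show "(\<lambda>x. D2 K \<nu> x - \<nu> * sgn x * \<bar>x\<bar> powr (\<nu> - 1) * drift K x - c * \<nu> * \<bar>x\<bar> powr (\<nu> - \<alpha>) * kappa0 \<alpha> \<nu>)
           \<in> o[at_infinity \<sqinter> principal X](\<lambda>x. \<bar>x\<bar> powr (\<nu> - \<alpha>))"
    proof (rule landau_o.smallI)
      fix e :: real assume e: "e > 0"
      obtain S1 where S1: "\<And>x. x \<in> {x\<in>X. x \<ge> x0} \<Longrightarrow> x \<ge> S1 \<Longrightarrow>
        \<bar>(\<integral>z. f2 \<nu> z - f2 \<nu> x \<partial>K x) - \<nu> * x powr (\<nu> - 1) * drift K x - c * \<nu> * x powr (\<nu> - \<alpha>) * kappa0 \<alpha> \<nu>\<bar>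
          \<le> e * x powr (\<nu> - \<alpha>)"
        using posF[OF f2_F1 f2_F2 f2_F3 e] by blast
      obtain S2 where S2: "\<And>x. x \<in> {x\<in>X. x \<le> - x0} \<Longrightarrow> - x \<ge> S2 \<Longrightarrow>
        \<bar>(\<integral>z. f2 \<nu> z - f2 \<nu> x \<partial>K x) + \<nu> * (- x) powr (\<nu> - 1) * drift K x - c * \<nu> * (- x) powr (\<nu> - \<alpha>) * kappa0 \<alpha> \<nu>\<bar>
          \<le> e * (- x) powr (\<nu> - \<alpha>)"
        using negF[OF e] by blast
      show "\<forall>\<^sub>F x in at_infinity \<sqinter> principal X. norm (D2 K \<nu> x - \<nu> * sgn x * \<bar>x\<bar> powr (\<nu> - 1) * drift K x - c * \<nu> * \<bar>x\<bar> powr (\<nu> - \<alpha>) * kappa0 \<alpha> \<nu>)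
             \<le> e * norm (\<bar>x\<bar> powr (\<nu> - \<alpha>))"
        unfolding eventually_inf_principal eventually_at_infinity
      proof (intro exI[of _ "max (max S1 S2) (max x0 1)"] allI impI)
        fix x :: real assume x: "max (max S1 S2) (max x0 1) \<le> norm x" "x \<in> X"
        show "norm (D2 K \<nu> x - \<nu> * sgn x * \<bar>x\<bar> powr (\<nu> - 1) * drift K x - c * \<nu> * \<bar>x\<bar> powr (\<nu> - \<alpha>) * kappa0 \<alpha> \<nu>)
             \<le> e * norm (\<bar>x\<bar> powr (\<nu> - \<alpha>))"
        proof (cases "x \<ge> 0")
          case True
          hence "\<bar>x\<bar> = x" "sgn x = 1" using x by auto
          thus ?thesis using S1[of x] x True by (simp add: D2_def)
        next
          case False
          hence "\<bar>x\<bar> = - x" "sgn x = -1" by auto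
          thus ?thesis using S2[of x] x False by (simp add: D2_def)
        qed
      qed
    qed
  qed
qed

end
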